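(* Let $\beta\in(1,2)$ with $\gamma(\beta)\in\mathbb Q\cap(0,1)$, and let $\gamma_1$ be the left Farey parent of $\gamma(\beta)$. Let $u_{\gamma(\beta)}$ and $u_{\gamma_1}$ be the lexicographically minimal cyclic shifts of $w_{\gamma(\beta)}$ and $w_{\gamma_1}$. Then for all $0<a<b<1$ with $b<u_{\gamma_1}u_{\gamma(\beta)}^\infty$, we have $(a,b)\in D_2(\beta)\cap D_1(\beta)\cap D_0(\beta)$.
   Context: Let $T_\beta(x)=\beta x\bmod1$ on $[0,1)$, $\beta\in(1,2)$. Points are identified with their greedy $\beta$-expansions, i.e. $x=\sum x_i\beta^{-i}$ with $x_i=\lfloor\beta T_\beta^{i-1}x\rfloor$. The order on points agrees with the lexicographic order on expansions. A finite word $u$ followed by a sequence denotes the point with that concatenated expansion, and $w^\infty=www\cdots$. Avoidance set: $J_\beta(a,b)=\{x\in(0,1):T_\beta^n x\notin(a,b)\ \forall n\ge0\}$. An integer $n$ is bad for $(a,b)$ if every periodic orbit of $T_\beta$ of period $n$ meets $(a,b)$. $N_\beta$ is the least $n$ with at least two periodic orbits of period $n$, and $B_\beta(a,b)$ is the set of bad $n>N_\beta$. $D_0(\beta)=\{(a,b):J_\beta(a,b)\ne\emptyset\}$, $D_1(\beta)=\{(a,b):J_\beta(a,b)\text{ uncountable}\}$, $D_2(\beta)=\{(a,b):B_\beta(a,b)\text{ finite}\}$. Farey tree of words: $w_{0/1}=0$ and $w_{1/1}=1$. For neighbours $a/b<c/d$ (meaning $bc-ad=1$), $w_{(a+c)/(b+d)}=w_{c/d}w_{a/b}$.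 The left and right Farey parents of a rational $\gamma\in(0,1)$ are the neighbours $\gamma_1<\gamma_2$ with $\gamma=\gamma_1\oplus\gamma_2:=(a+c)/(b+d)$. $\gamma(\beta)=\sup\{\gamma\in\mathbb Q\cap[0,1]: w_\gamma^\infty \text{ is admissible for }\beta\}$, i.e. the number of the maximal admissible balanced sequence. *)

theory Defs
  imports "HOL-Analysis.Analysis"
begin

definition Tb :: "real \<Rightarrow> real \<Rightarrow> real" where
  "Tb \<beta> x = frac (\<beta> * x)"

text \<open>Greedy digits: digit i (0-based) is x_{i+1} = floor (beta * T^i x).\<close>
definition gdig :: "real \<Rightarrow> real \<Rightarrow> nat \<Rightarrow> nat" where
  "gdig \<beta> x i = nat \<lfloor>\<beta> * (Tb \<beta> ^^ i) x\<rfloor>"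

definition admissible :: "real \<Rightarrow> (nat \<Rightarrow> nat) \<Rightarrow> bool" where
  "admissible \<beta> s \<longleftrightarrow> (\<exists>x. 0 \<le> x \<and> x < 1 \<and> (\<forall>i. gdig \<beta> x i = s i))"

text \<open>The point with expansion s: x = sum s_i beta^{-i} (indices shifted to start at 0).\<close>
definition seqval :: "real \<Rightarrow> (nat \<Rightarrow> nat) \<Rightarrow> real" where
  "seqval \<beta> s = (\<Sum>i. real (s i) / \<beta> ^ (Suc i))"

definition per_seq :: "nat list \<Rightarrow> nat \<Rightarrow> nat" where
  "per_seq w i = w ! (i mod length w)"

definition pre_per_seq :: "nat list \<Rightarrow> nat list \<Rightarrow> nat \<Rightarrow> nat" where
  "pre_per_seq u w i = (if i < length u then u ! i else w ! ((i - length u) mod length w))"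

definition farey_neighbours :: "rat \<Rightarrow> rat \<Rightarrow> bool" where
  "farey_neighbours x y \<longleftrightarrow>
     (let (a, b) = quotient_of x; (c, d) = quotient_of y in b * c - a * d = 1)"

definition farey_mediant :: "rat \<Rightarrow> rat \<Rightarrow> rat" where
  "farey_mediant x y =
     (let (a, b) = quotient_of x; (c, d) = quotient_of y in Fract (a + c) (b + d))"

definition left_parent :: "rat \<Rightarrow> rat" where
  "left_parent g = (THE x. \<exists>y. 0 \<le> x \<and> x < y \<and> y \<le> 1 \<and> farey_neighbours x y \<and> farey_mediant x y = g)"

definition right_parent :: "rat \<Rightarrow> rat" where
  "right_parent g = (THE y. \<exists>x. 0 \<le> x \<and> x < y \<and> y \<le> 1 \<and> farey_neighbours x y \<and> farey_mediant x y = g)"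

text \<open>Recursion w_0 = 0, w_1 = 1, w_{g} = w_{right parent} w_{left parent};
  the fuel argument (the denominator) bounds the recursion depth, since parents have strictly
  smaller denominators.\<close>
fun farey_word_aux :: "nat \<Rightarrow> rat \<Rightarrow> nat list" where
  "farey_word_aux 0 g = []"
| "farey_word_aux (Suc n) g =
     (if g = 0 then [0] else if g = 1 then [1]
      else farey_word_aux n (right_parent g) @ farey_word_aux n (left_parent g))"

definition farey_word :: "rat \<Rightarrow> nat list" where
  "farey_word g = farey_word_aux (nat (snd (quotient_of g))) g"

definition lex_less :: "nat list \<Rightarrow> nat list \<Rightarrow> bool" where
  "lex_less u v \<longleftrightarrow> (\<exists>i. i < length u \<and> i < length v \<and> take i u = take i v \<and> u ! i < v ! i)"

definition min_rot :: "nat list \<Rightarrow> nat list" where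
  "min_rot w = (THE u. u \<in> {rotate k w | k. k < length w} \<and>
                   (\<forall>v \<in> {rotate k w | k. k < length w}. v \<noteq> u \<longrightarrow> lex_less u v))"

definition gamma_beta :: "real \<Rightarrow> real" where
  "gamma_beta \<beta> = Sup {real_of_rat q | q. 0 \<le> q \<and> q \<le> 1 \<and> admissible \<beta> (per_seq (farey_word q))}"

definition J_set :: "real \<Rightarrow> real \<Rightarrow> real \<Rightarrow> real set" where
  "J_set \<beta> a b = {x. 0 < x \<and> x < 1 \<and> (\<forall>n. (Tb \<beta> ^^ n) x \<notin> {a<..<b})}"

definition periodic_pt :: "real \<Rightarrow> nat \<Rightarrow> real \<Rightarrow> bool" where
  "periodic_pt \<beta> n x \<longleftrightarrow> 0 \<le> x \<and> x < 1 \<and> 0 < n \<and> (Tb \<beta> ^^ n) x = x \<and>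
      (\<forall>m. 0 < m \<and> m < n \<longrightarrow> (Tb \<beta> ^^ m) x \<noteq> x)"

definition orbit :: "real \<Rightarrow> real \<Rightarrow> real set" where
  "orbit \<beta> x = {(Tb \<beta> ^^ k) x | k. True}"

definition N_beta :: "real \<Rightarrow> nat" where
  "N_beta \<beta> = (LEAST n. \<exists>x y. periodic_pt \<beta> n x \<and> periodic_pt \<beta> n y \<and> orbit \<beta> x \<noteq> orbit \<beta> y)"

definition bad :: "real \<Rightarrow> real \<Rightarrow> real \<Rightarrow> nat \<Rightarrow> bool" where
  "bad \<beta> a b n \<longleftrightarrow> (\<forall>x. periodic_pt \<beta> n x \<longrightarrow> orbit \<beta> x \<inter> {a<..<b} \<noteq> {})"

definition B_set :: "real \<Rightarrow> real \<Rightarrow> real \<Rightarrow> nat set" where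
  "B_set \<beta> a b = {n. N_beta \<beta> < n \<and> bad \<beta> a b n}"

definition D0 :: "real \<Rightarrow> (real \<times> real) set" where
  "D0 \<beta> = {(a, b). J_set \<beta> a b \<noteq> {}}"

definition D1 :: "real \<Rightarrow> (real \<times> real) set" where
  "D1 \<beta> = {(a, b). uncountable (J_set \<beta> a b)}"

definition D2 :: "real \<Rightarrow> (real \<times> real) set" where
  "D2 \<beta> = {(a, b). finite (B_set \<beta> a b)}"

end

theory Submission
  imports Defs "HOL-Computational_Algebra.Primes"
begin


definition shift :: "nat \<Rightarrow> (nat \<Rightarrow> nat) \<Rightarrow> nat \<Rightarrow> nat" where
  "shift k s = (\<lambda>i. s (i + k))"

definition bnd :: "(nat \<Rightarrow> nat) \<Rightarrow> bool" where
  "bnd s \<longleftrightarrow> (\<forall>i. s i \<le> 1)"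

definition PS :: "(nat \<Rightarrow> nat) \<Rightarrow> nat \<Rightarrow> real" where
  "PS s n = (\<Sum>i<n. real (s i))"

lemma shift_shift[simp]: "shift k (shift l s) = shift (k + l) s"
  by (simp add: shift_def ac_simps)

lemma shift_0[simp]: "shift 0 s = s" by (simp add: shift_def)

lemma bnd_shift: "bnd s \<Longrightarrow> bnd (shift k s)"
  by (simp add: bnd_def shift_def)

lemma summable_seq:
  assumes b: "1 < \<beta>" and s: "bnd s"
  shows "summable (\<lambda>i. real (s i) / \<beta> ^ Suc i)"
proof (rule summable_comparison_test[where g="\<lambda>i. (1/\<beta>) ^ Suc i"])
  show "\<exists>N. \<forall>n\<ge>N. norm (real (s n) / \<beta> ^ Suc n) \<le> (1 / \<beta>) ^ Suc n"
  proof (intro exI allI impI)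
    fix n
    have "s n \<le> 1" using s by (simp add: bnd_def)
    then show "norm (real (s n) / \<beta> ^ Suc n) \<le> (1 / \<beta>) ^ Suc n"
      using b by (simp add: power_divide divide_right_mono)
  qed
  show "summable (\<lambda>i. (1 / \<beta>) ^ Suc i)"
    using b by (intro summable_ignore_initial_segment[where k=1, simplified] summable_geometric) auto
qed

lemma seqval_sums:
  assumes "1 < \<beta>" "bnd s"
  shows "(\<lambda>i. real (s i) / \<beta> ^ Suc i) sums seqval \<beta> s"
  using summable_seq[OF assms] by (simp add: seqval_def summable_sums)

lemma seqval_split:
  assumes b: "1 < \<beta>" and s: "bnd s"
  shows "seqval \<beta> s = (\<Sum>i<k. real (s i) / \<beta> ^ Suc i) + seqval \<beta> (shift k s) / \<beta> ^ k"
proof -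
  have sm: "summable (\<lambda>i. real (s i) / \<beta> ^ Suc i)" using summable_seq[OF b s] .
  have "seqval \<beta> s = (\<Sum>n. real (s (n + k)) / \<beta> ^ Suc (n + k)) + (\<Sum>i<k. real (s i) / \<beta> ^ Suc i)"
    unfolding seqval_def using suminf_split_initial_segment[OF sm, of k] by simp
  also have "(\<Sum>n. real (s (n + k)) / \<beta> ^ Suc (n + k)) = (\<Sum>n. (real (s (n + k)) / \<beta> ^ Suc n) / \<beta> ^ k)"
    by (simp add: power_add mult_ac)
  also have "\<dots> = (\<Sum>n. real (s (n + k)) / \<beta> ^ Suc n) / \<beta> ^ k"
    using summable_seq[OF b bnd_shift[OF s, of k]] by (intro suminf_divide) (simp add: shift_def)
  finally show ?thesis by (simp add: seqval_def shift_def)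
qed

lemma seqval_step:
  assumes b: "1 < \<beta>" and s: "bnd s"
  shows "\<beta> * seqval \<beta> s = real (s 0) + seqval \<beta> (shift 1 s)"
proof -
  have "seqval \<beta> s = real (s 0) / \<beta> + seqval \<beta> (shift 1 s) / \<beta>"
    using seqval_split[OF b s, of 1] by simp
  then show ?thesis using b by (simp add: field_simps)
qed

lemma seqval_nonneg: "1 < \<beta> \<Longrightarrow> bnd s \<Longrightarrow> 0 \<le> seqval \<beta> s"
  unfolding seqval_def by (intro suminf_nonneg summable_seq) auto

lemma seqval_mono_pointwise:
  assumes b: "1 < \<beta>" and s: "bnd s" and t: "bnd t" and le: "\<And>i. s i \<le> t i"
  shows "seqval \<beta> s \<le> seqval \<beta> t"
  unfolding seqval_def using b le
  by (intro suminf_le summable_seq s t) (auto intro!: divide_right_mono)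

definition ones :: "nat \<Rightarrow> nat" where "ones = (\<lambda>i. 1)"

lemma seqval_ones: assumes b: "1 < \<beta>" shows "seqval \<beta> ones = 1 / (\<beta> - 1)"
proof -
  have g: "(\<lambda>i. (1/\<beta>) ^ i) sums (1 / (1 - 1/\<beta>))"
    using b geometric_sums[of "1/\<beta>"] by auto
  have "(\<lambda>i. (1/\<beta>) ^ i / \<beta>) sums ((1 / (1 - 1/\<beta>)) / \<beta>)"
    using sums_divide[OF g] .
  moreover have "(\<lambda>i. (1/\<beta>) ^ i / \<beta>) = (\<lambda>i. real (ones i) / \<beta> ^ Suc i)"
    by (rule ext) (simp add: ones_def power_one_over)
  moreover have "(1 / (1 - 1/\<beta>)) / \<beta> = 1 / (\<beta> - 1)"
  proof -
    have "\<beta> * (1 - 1/\<beta>) = \<beta> - 1" using b by (simp add: algebra_simps)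
    then show ?thesis by (simp add: divide_divide_eq_left mult.commute)
  qed
  ultimately show ?thesis unfolding seqval_def by (simp add: sums_iff)
qed

lemma bnd_ones: "bnd ones" by (simp add: bnd_def ones_def)

lemma seqval_le: assumes "1 < \<beta>" "bnd s" shows "seqval \<beta> s \<le> 1 / (\<beta> - 1)"
  using seqval_mono_pointwise[OF assms(1,2) bnd_ones] assms seqval_ones
  by (auto simp: bnd_def ones_def)


lemma PS_Suc: "PS s (Suc n) = PS s n + real (s n)" by (simp add: PS_def)
lemma PS_0[simp]: "PS s 0 = 0" by (simp add: PS_def)

lemma abel_id:
  assumes b: "1 < \<beta>"
  shows "(\<Sum>i<n. real (s i) / \<beta> ^ Suc i) =
         (1 - 1/\<beta>) * (\<Sum>j<n. PS s j / \<beta> ^ j) + PS s n / \<beta> ^ n"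
proof (induction n)
  case 0 then show ?case by simp
next
  case (Suc n)
  have bn: "\<beta> ^ n > 0" using b by simp
  have e1: "(\<Sum>i<Suc n. real (s i) / \<beta> ^ Suc i) =
        (1 - 1/\<beta>) * (\<Sum>j<n. PS s j / \<beta> ^ j) + (PS s n / \<beta> ^ n + real (s n) / \<beta> ^ Suc n)"
    using Suc by simp
  have e2: "PS s n / \<beta> ^ n + real (s n) / \<beta> ^ Suc n =
             (1 - 1/\<beta>) * (PS s n / \<beta> ^ n) + PS s (Suc n) / \<beta> ^ Suc n"
    using b bn by (simp add: PS_Suc field_simps)
  show ?case unfolding e1 e2 by (simp add: algebra_simps)
qed

lemma abel_diff:
  assumes b: "1 < \<beta>"
  shows "(\<Sum>i<n. (real (t i) - real (s i)) / \<beta> ^ Suc i) =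
         (1 - 1/\<beta>) * (\<Sum>j<n. (PS t j - PS s j) / \<beta> ^ j) + (PS t n - PS s n) / \<beta> ^ n"
proof -
  have "(\<Sum>i<n. (real (t i) - real (s i)) / \<beta> ^ Suc i) =
        (\<Sum>i<n. real (t i) / \<beta> ^ Suc i) - (\<Sum>i<n. real (s i) / \<beta> ^ Suc i)"
    by (simp add: sum_subtractf diff_divide_distrib)
  also have "\<dots> = (1 - 1/\<beta>) * ((\<Sum>j<n. PS t j / \<beta> ^ j) - (\<Sum>j<n. PS s j / \<beta> ^ j))
        + (PS t n / \<beta> ^ n - PS s n / \<beta> ^ n)"
    unfolding abel_id[OF b] by (simp add: algebra_simps)
  also have "(\<Sum>j<n. PS t j / \<beta> ^ j) - (\<Sum>j<n. PS s j / \<beta> ^ j) = (\<Sum>j<n. (PS t j - PS s j) / \<beta> ^ j)"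
    by (simp add: sum_subtractf diff_divide_distrib)
  finally show ?thesis by (simp add: diff_divide_distrib)
qed

lemma seqval_diff_sums:
  assumes b: "1 < \<beta>" and s: "bnd s" and t: "bnd t"
  shows "(\<lambda>n. \<Sum>i<n. (real (t i) - real (s i)) / \<beta> ^ Suc i) \<longlonglongrightarrow> seqval \<beta> t - seqval \<beta> s"
proof -
  have "(\<lambda>i. real (t i) / \<beta> ^ Suc i - real (s i) / \<beta> ^ Suc i) sums (seqval \<beta> t - seqval \<beta> s)"
    using sums_diff[OF seqval_sums[OF b t] seqval_sums[OF b s]] .
  then show ?thesis by (simp add: sums_def diff_divide_distrib)
qed

lemma seqval_mono_PS:
  assumes b: "1 < \<beta>" and s: "bnd s" and t: "bnd t" and le: "\<And>n. PS s n \<le> PS t n"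
  shows "seqval \<beta> s \<le> seqval \<beta> t"
proof -
  have "0 \<le> seqval \<beta> t - seqval \<beta> s"
  proof (rule LIMSEQ_le_const[OF seqval_diff_sums[OF b s t]], intro exI allI impI)
    fix n
    have "0 \<le> (1 - 1/\<beta>) * (\<Sum>j<n. (PS t j - PS s j) / \<beta> ^ j) + (PS t n - PS s n) / \<beta> ^ n"
      using b le by (intro add_nonneg_nonneg mult_nonneg_nonneg sum_nonneg divide_nonneg_pos)
        (auto simp: field_simps)
    then show "0 \<le> (\<Sum>i<n. (real (t i) - real (s i)) / \<beta> ^ Suc i)"
      unfolding abel_diff[OF b] .
  qed
  then show ?thesis by simp
qed

lemma seqval_strict_PS:
  assumes b: "1 < \<beta>" and s: "bnd s" and t: "bnd t" and le: "\<And>n. PS s n \<le> PS t n"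
    and lt: "PS s j < PS t j"
  shows "seqval \<beta> s < seqval \<beta> t"
proof -
  define c where "c = (1 - 1/\<beta>) * ((PS t j - PS s j) / \<beta> ^ j)"
  have cpos: "0 < c" unfolding c_def using b lt by (intro mult_pos_pos divide_pos_pos) auto
  have "c \<le> seqval \<beta> t - seqval \<beta> s"
  proof (rule LIMSEQ_le_const[OF seqval_diff_sums[OF b s t]], intro exI allI impI)
    fix n assume n: "Suc j \<le> n"
    have nn: "\<And>j. 0 \<le> (PS t j - PS s j) / \<beta> ^ j" using b le by (simp add: field_simps)
    have "(PS t j - PS s j) / \<beta> ^ j \<le> (\<Sum>j<n. (PS t j - PS s j) / \<beta> ^ j)"
      using n nn by (intro member_le_sum) auto
    then have "c \<le> (1 - 1/\<beta>) * (\<Sum>j<n. (PS t j - PS s j) / \<beta> ^ j)"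
      unfolding c_def using b by (intro mult_left_mono) auto
    also have "\<dots> \<le> (1 - 1/\<beta>) * (\<Sum>j<n. (PS t j - PS s j) / \<beta> ^ j) + (PS t n - PS s n) / \<beta> ^ n"
      using nn by simp
    finally show "c \<le> (\<Sum>i<n. (real (t i) - real (s i)) / \<beta> ^ Suc i)"
      unfolding abel_diff[OF b] .
  qed
  then show ?thesis using cpos by simp
qed

lemma Tb_range: "0 \<le> Tb \<beta> x \<and> Tb \<beta> x < 1"
  by (simp add: Tb_def frac_lt_1)

lemma funpow_Tb_range:
  assumes "0 \<le> x" "x < 1" shows "0 \<le> (Tb \<beta> ^^ k) x \<and> (Tb \<beta> ^^ k) x < 1"
proof (cases k)
  case 0 then show ?thesis using assms by simp
next
  case (Suc m)
  have "(Tb \<beta> ^^ Suc m) x = Tb \<beta> ((Tb \<beta> ^^ m) x)" by simp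
  then show ?thesis using Suc Tb_range by metis
qed

lemma adm_shift_lemma:
  assumes b: "1 < \<beta>" and s: "bnd s" and lt: "\<And>k. seqval \<beta> (shift k s) < 1"
  shows "(Tb \<beta> ^^ k) (seqval \<beta> s) = seqval \<beta> (shift k s) \<and> gdig \<beta> (seqval \<beta> s) k = s k"
proof (induction k)
  case 0
  have st: "\<beta> * seqval \<beta> s = real (s 0) + seqval \<beta> (shift 1 s)" using seqval_step[OF b s] .
  have "0 \<le> seqval \<beta> (shift 1 s)" "seqval \<beta> (shift 1 s) < 1"
    using seqval_nonneg[OF b bnd_shift[OF s]] lt by auto
  then have "\<lfloor>\<beta> * seqval \<beta> s\<rfloor> = int (s 0)" unfolding st by (intro floor_unique) auto
  then show ?case by (simp add: gdig_def)
next
  case (Suc k)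
  let ?y = "seqval \<beta> (shift k s)"
  have st: "\<beta> * ?y = real (s k) + seqval \<beta> (shift (Suc k) s)"
    using seqval_step[OF b bnd_shift[OF s, of k]] by (simp add: shift_def)
  have st2: "\<beta> * seqval \<beta> (shift (Suc k) s) = real (s (Suc k)) + seqval \<beta> (shift (Suc (Suc k)) s)"
    using seqval_step[OF b bnd_shift[OF s, of "Suc k"]] by (simp add: shift_def)
  have r1: "0 \<le> seqval \<beta> (shift (Suc k) s)" "seqval \<beta> (shift (Suc k) s) < 1"
    using seqval_nonneg[OF b bnd_shift[OF s]] lt by auto
  have r2: "0 \<le> seqval \<beta> (shift (Suc (Suc k)) s)" "seqval \<beta> (shift (Suc (Suc k)) s) < 1"
    using seqval_nonneg[OF b bnd_shift[OF s]] lt by auto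
  have fl: "\<lfloor>\<beta> * ?y\<rfloor> = int (s k)" unfolding st using r1 by (intro floor_unique) auto
  have T0: "(Tb \<beta> ^^ Suc k) (seqval \<beta> s) = Tb \<beta> ?y" using Suc.IH by simp
  have T1: "Tb \<beta> ?y = seqval \<beta> (shift (Suc k) s)" unfolding Tb_def frac_def using fl st by simp
  have T: "(Tb \<beta> ^^ Suc k) (seqval \<beta> s) = seqval \<beta> (shift (Suc k) s)" using T0 T1 by simp
  have fl2: "\<lfloor>\<beta> * seqval \<beta> (shift (Suc k) s)\<rfloor> = int (s (Suc k))"
    unfolding st2 using r2 by (intro floor_unique) auto
  show ?case using T fl2 by (simp add: gdig_def)
qed

lemma adm_from_vals:
  assumes b: "1 < \<beta>" and s: "bnd s" and lt: "\<And>k. seqval \<beta> (shift k s) < 1"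
  shows "admissible \<beta> s"
  unfolding admissible_def
  using adm_shift_lemma[OF b s lt] seqval_nonneg[OF b s] lt[of 0] by auto

lemma gdig_props:
  assumes b: "1 < \<beta>" "\<beta> < 2" and x: "0 \<le> x" "x < 1"
  shows "gdig \<beta> x k \<le> 1 \<and> \<beta> * (Tb \<beta> ^^ k) x = real (gdig \<beta> x k) + (Tb \<beta> ^^ Suc k) x"
proof -
  define y where "y = (Tb \<beta> ^^ k) x"
  have y: "0 \<le> y" "y < 1" unfolding y_def using funpow_Tb_range[OF x] by auto
  have "\<beta> * y \<le> \<beta> * 1" using y b by (intro mult_left_mono) auto
  then have "0 \<le> \<beta> * y" "\<beta> * y < 2" using y b by (simp_all, linarith)
  then have "\<lfloor>\<beta> * y\<rfloor> \<in> {0, 1}"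
  proof -
    assume h: "0 \<le> \<beta> * y" "\<beta> * y < 2"
    define k where "k = \<lfloor>\<beta> * y\<rfloor>"
    have "0 \<le> k" using h unfolding k_def by simp
    moreover have "k < 2" using h unfolding k_def by (simp add: floor_less_iff)
    ultimately have "k = 0 \<or> k = 1" by arith
    then show ?thesis unfolding k_def by auto
  qed
  then show ?thesis unfolding gdig_def y_def[symmetric]
    by (auto simp: Tb_def frac_def y_def)
qed

lemma admissible_val:
  assumes b: "1 < \<beta>" "\<beta> < 2" and adm: "admissible \<beta> t"
  shows "bnd t \<and> seqval \<beta> t < 1"
proof -
  obtain x where x: "0 \<le> x" "x < 1" and tx: "\<And>i. gdig \<beta> x i = t i"
    using adm unfolding admissible_def by auto
  have bt: "bnd t" using gdig_props[OF b x] tx by (auto simp: bnd_def)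
  have exp: "x = (\<Sum>i<n. real (t i) / \<beta> ^ Suc i) + (Tb \<beta> ^^ n) x / \<beta> ^ n" for n
  proof (induction n)
    case 0 show ?case by simp
  next
    case (Suc n)
    have "\<beta> * (Tb \<beta> ^^ n) x = real (t n) + (Tb \<beta> ^^ Suc n) x" using gdig_props[OF b x, of n] tx by simp
    then have "(Tb \<beta> ^^ n) x / \<beta> ^ n = real (t n) / \<beta> ^ Suc n + (Tb \<beta> ^^ Suc n) x / \<beta> ^ Suc n"
      using b(1) by (simp add: field_simps)
    then show ?case using Suc by simp
  qed
  have lim0: "(\<lambda>n. (Tb \<beta> ^^ n) x / \<beta> ^ n) \<longlonglongrightarrow> 0"
  proof (rule Lim_null_comparison[where g="\<lambda>n. (1/\<beta>) ^ n"])
    show "\<forall>\<^sub>F n in sequentially. norm ((Tb \<beta> ^^ n) x / \<beta> ^ n) \<le> (1 / \<beta>) ^ n"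
    proof (intro always_eventually allI)
      fix n
      have "0 \<le> (Tb \<beta> ^^ n) x \<and> (Tb \<beta> ^^ n) x < 1" using funpow_Tb_range[OF x] by auto
      then show "norm ((Tb \<beta> ^^ n) x / \<beta> ^ n) \<le> (1 / \<beta>) ^ n"
        using b(1) by (auto simp: power_divide divide_right_mono)
    qed
    show "(\<lambda>n. (1/\<beta>) ^ n) \<longlonglongrightarrow> 0" using b(1) by (intro LIMSEQ_power_zero) auto
  qed
  have "(\<lambda>n. \<Sum>i<n. real (t i) / \<beta> ^ Suc i) \<longlonglongrightarrow> x"
  proof -
    have "(\<lambda>n. x - (Tb \<beta> ^^ n) x / \<beta> ^ n) \<longlonglongrightarrow> x - 0" by (intro tendsto_intros lim0)
    moreover have "(\<lambda>n. x - (Tb \<beta> ^^ n) x / \<beta> ^ n) = (\<lambda>n. \<Sum>i<n. real (t i) / \<beta> ^ Suc i)"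
      using exp by (auto simp: algebra_simps intro!: ext)
    ultimately show ?thesis by simp
  qed
  then have "seqval \<beta> t = x"
    using seqval_sums[OF b(1) bt] by (simp add: sums_def LIMSEQ_unique)
  then show ?thesis using bt x by simp
qed


lemma coprime_lin: "u * a + v * b = (1::int) \<Longrightarrow> coprime a b"
proof (rule coprimeI)
  fix c assume "u * a + v * b = 1" "c dvd a" "c dvd b"
  then have "c dvd 1" by (metis dvd_add dvd_mult)
  then show "is_unit c" by simp
qed

lemma ceil_char:
  assumes "(0::int) < Q"
  shows "\<lceil>(of_int n / of_int Q :: real)\<rceil> = m \<longleftrightarrow> (m - 1) * Q < n \<and> n \<le> m * Q"
proof -
  have Q: "(0::real) < of_int Q" using assms by simp
  have "\<lceil>(of_int n / of_int Q :: real)\<rceil> = m \<longleftrightarrow>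
        of_int m - 1 < (of_int n / of_int Q :: real) \<and> of_int n / of_int Q \<le> (of_int m :: real)"
    by (rule ceiling_eq_iff)
  also have "\<dots> \<longleftrightarrow> (of_int m - 1) * of_int Q < (of_int n :: real) \<and> of_int n \<le> of_int m * (of_int Q :: real)"
    using Q by (simp add: pos_less_divide_eq pos_divide_le_eq)
  also have "\<dots> \<longleftrightarrow> of_int ((m - 1) * Q) < (of_int n :: real) \<and> of_int n \<le> (of_int (m * Q) :: real)"
    by simp
  also have "\<dots> \<longleftrightarrow> (m - 1) * Q < n \<and> n \<le> m * Q" by (simp only: of_int_less_iff of_int_le_iff)
  finally show ?thesis .
qed

lemma ceil_intro:
  assumes "(0::int) < Q" "(m - 1) * Q < n" "n \<le> m * Q"
  shows "\<lceil>(of_int n / of_int Q :: real)\<rceil> = m"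
  using ceil_char[OF assms(1)] assms(2,3) by blast

lemma ceil_elim:
  assumes "(0::int) < Q"
  shows "(\<lceil>(of_int n / of_int Q :: real)\<rceil> - 1) * Q < n \<and> n \<le> \<lceil>(of_int n / of_int Q :: real)\<rceil> * Q"
  using ceil_char[OF assms, of n "\<lceil>(of_int n / of_int Q :: real)\<rceil>"] by simp

lemma ceil_succ_div:
  assumes "(0::int) < Q"
  shows "\<lceil>(of_int (n + 1) / of_int Q :: real)\<rceil> = n div Q + 1"
proof (rule ceil_intro[OF assms])
  have dm: "n = n div Q * Q + n mod Q" by simp
  have mm: "0 \<le> n mod Q" "n mod Q < Q" using assms by simp_all
  show "(n div Q + 1 - 1) * Q < n + 1" using dm mm by (simp, linarith)
  have ee: "(n div Q + 1) * Q = n div Q * Q + Q" by (simp add: distrib_right)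
  have "n < (n div Q + 1) * Q" using dm mm ee by linarith
  then show "n + 1 \<le> (n div Q + 1) * Q" by simp
qed

definition parR :: "rat \<Rightarrow> rat \<Rightarrow> rat \<Rightarrow> bool" where
  "parR g x y \<longleftrightarrow> 0 \<le> x \<and> x < y \<and> y \<le> 1 \<and> farey_neighbours x y \<and> farey_mediant x y = g"

lemma left_parent_alt: "left_parent g = (THE x. \<exists>y. parR g x y)"
  by (simp add: left_parent_def parR_def)
lemma right_parent_alt: "right_parent g = (THE y. \<exists>x. parR g x y)"
  by (simp add: right_parent_def parR_def)

lemma quot_P_lt_Q:
  assumes "0 < g" "g < 1" "quotient_of g = (P, Q)"
  shows "0 < P" "P < Q" "0 < Q"
proof -
  have Q: "0 < Q" using quotient_of_denom_pos[OF assms(3)] .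
  have g: "g = of_int P / of_int Q" using quotient_of_div[OF assms(3)] .
  have Qr: "(0::rat) < of_int Q" using Q by simp
  show "0 < P" using assms(1) Qr unfolding g by (simp add: zero_less_divide_iff)
  show "P < Q" using assms(2) Qr unfolding g by (simp add: divide_less_eq)
  show "0 < Q" by fact
qed

lemma unique_cd:
  assumes cop: "coprime P Q" and Q: "0 < Q"
    and e1: "Q * c - P * d = (1::int)" and d1: "0 \<le> d" "d < Q"
    and e2: "Q * c' - P * d' = 1" and d2: "0 \<le> d'" "d' < Q"
  shows "c = c' \<and> d = d'"
proof -
  have "Q * (c - c') = P * (d - d')" using e1 e2 by (simp add: algebra_simps)
  then have "Q dvd P * (d - d')" by (metis dvd_triv_left)
  then have "Q dvd (d - d')" using cop by (simp add: coprime_commute coprime_dvd_mult_right_iff)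
  then obtain k where k: "d - d' = Q * k" by (auto simp: dvd_def)
  have "k = 0"
  proof (rule ccontr)
    assume "k \<noteq> 0"
    then have "\<bar>Q * k\<bar> \<ge> Q" using Q by (simp add: abs_mult)
    then show False using k d1 d2 by linarith
  qed
  then have "d = d'" using k by simp
  then have "Q * c - P * d' = 1" using e1 by simp
  then have "Q * c = Q * c'" using e2 by linarith
  then show ?thesis using Q \<open>d = d'\<close> by simp
qed

lemma parR_char:
  assumes "parR g x y" and gq: "quotient_of g = (P, Q)"
  shows "\<exists>a b c d. quotient_of x = (a, b) \<and> quotient_of y = (c, d) \<and> b * c - a * d = 1
         \<and> a + c = P \<and> b + d = Q \<and> 0 < b \<and> 0 < d"
proof -
  obtain a b where xq: "quotient_of x = (a, b)" by (cases "quotient_of x")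
  obtain c d where yq: "quotient_of y = (c, d)" by (cases "quotient_of y")
  have b: "0 < b" using quotient_of_denom_pos[OF xq] .
  have d: "0 < d" using quotient_of_denom_pos[OF yq] .
  have det: "b * c - a * d = 1" using assms(1) xq yq by (simp add: parR_def farey_neighbours_def)
  have med: "Fract (a + c) (b + d) = g" using assms(1) xq yq by (simp add: parR_def farey_mediant_def)
  have cop1: "coprime (a + c) (b + d)"
    by (rule coprime_lin[of "-d" _ c]) (use det in \<open>simp add: algebra_simps\<close>)
  have cop2: "coprime P Q" using quotient_of_coprime[OF gq] .
  have Q: "0 < Q" using quotient_of_denom_pos[OF gq] .
  have "quotient_of g = Rat.normalize (a + c, b + d)" using med quotient_of_Fract by metis
  also have "\<dots> = (a + c, b + d)" using cop1 b d by (intro normalize_stable) auto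
  finally have "(P, Q) = (a + c, b + d)" using gq by simp
  then show ?thesis using xq yq det b d by auto
qed

lemma parents:
  assumes g0: "0 < g" and g1: "g < 1" and gq: "quotient_of g = (P, Q)"
  obtains a b c d where "quotient_of (left_parent g) = (a, b)" "quotient_of (right_parent g) = (c, d)"
    "P * b - a * Q = 1" "Q * c - P * d = 1" "b * c - a * d = 1" "a + c = P" "b + d = Q"
    "0 \<le> a" "0 < b" "0 < c" "0 < d"
    "0 \<le> left_parent g" "right_parent g \<le> 1" "left_parent g < right_parent g"
proof -
  have P0: "0 < P" and PQ: "P < Q" and Q0: "0 < Q" using quot_P_lt_Q[OF g0 g1 gq] by auto
  have cop: "coprime P Q" using quotient_of_coprime[OF gq] .
  obtain u v where uv: "u * P + v * Q = 1"
    using bezout_int[of P Q] cop by (auto simp: coprime_iff_gcd_eq_1)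
  define d where "d = (- u) mod Q"
  define c where "c = v - P * ((- u) div Q)"
  have dec: "-u = Q * ((- u) div Q) + d" unfolding d_def by simp
  have e: "Q * c - P * d = 1"
  proof -
    have "Q * c - P * d = Q * v - P * (Q * ((- u) div Q) + d) + P * d - P * d + 0"
      unfolding c_def by (simp add: algebra_simps)
    also have "\<dots> = Q * v - P * (- u)" using dec by simp
    finally show ?thesis using uv by (simp add: algebra_simps)
  qed
  have d0: "0 \<le> d" "d < Q" unfolding d_def using Q0 by auto
  have dnz: "d \<noteq> 0"
  proof
    assume "d = 0"
    then have "Q * c = 1" using e by simp
    then have "Q dvd 1" by (metis dvd_triv_left)
    then show False using PQ P0 by simp
  qed
  then have d1: "0 < d" using d0 by simp
  define a where "a = P - c"
  define b where "b = Q - d"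
  have b1: "0 < b" unfolding b_def using d0 by simp
  have Pb: "P * b - a * Q = 1" unfolding a_def b_def using e by (simp add: algebra_simps)
  have det: "b * c - a * d = 1" unfolding a_def b_def using e by (simp add: algebra_simps)
  have c1: "0 < c"
  proof -
    have "Q * c = 1 + P * d" using e by simp
    moreover have "0 \<le> P * d" using P0 d1 by simp
    ultimately have "0 < Q * c" by simp
    then show ?thesis using Q0 by (simp add: zero_less_mult_iff)
  qed
  have a0: "0 \<le> a"
  proof -
    have "Q * a = P * b - 1" using Pb by (simp add: algebra_simps)
    moreover have "1 \<le> P * b" using mult_mono[of 1 P 1 b] P0 b1 by simp
    ultimately have "0 \<le> Q * a" by simp
    then show ?thesis using Q0 by (simp add: zero_le_mult_iff)
  qed
  have copab: "coprime a b" by (rule coprime_lin[of "-d" _ c]) (use det in \<open>simp add: algebra_simps\<close>)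
  have copcd: "coprime c d" by (rule coprime_lin[of b _ "-a"]) (use det in \<open>simp add: algebra_simps\<close>)
  define x where "x = Fract a b"
  define y where "y = Fract c d"
  have qx: "quotient_of x = (a, b)" unfolding x_def using copab b1 by (simp add: quotient_of_Fract)
  have qy: "quotient_of y = (c, d)" unfolding y_def using copcd d1 by (simp add: quotient_of_Fract)
  have br: "(0::rat) < of_int b" "(0::rat) < of_int d" using b1 d1 by auto
  have cd: "c \<le> d"
  proof -
    have "1 \<le> (Q - P) * d" using mult_mono[of 1 "Q - P" 1 d] PQ d1 by simp
    then have "Q * c \<le> Q * d" using e by (simp add: algebra_simps)
    then show ?thesis using Q0 by simp
  qed
  have R: "parR g x y"
    unfolding parR_def
  proof (intro conjI)
    show "0 \<le> x" unfolding x_def Fract_of_int_quotient using a0 b1 by simp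
    have "a * d < c * b" using det by (simp add: algebra_simps)
    then have "(of_int a :: rat) * of_int d < of_int c * of_int b"
      by (simp only: of_int_mult[symmetric] of_int_less_iff)
    then show "x < y" unfolding x_def y_def Fract_of_int_quotient using br by (simp add: field_simps)
    show "y \<le> 1" unfolding y_def Fract_of_int_quotient using cd br by simp
    show "farey_neighbours x y" unfolding farey_neighbours_def using qx qy det by simp
    have "Fract (a + c) (b + d) = Fract P Q" using \<open>a = P - c\<close> \<open>b = Q - d\<close> by simp
    then show "farey_mediant x y = g" unfolding farey_mediant_def using qx qy gq Fract_quotient_of[of g] by simp
  qed
  have uniq: "x' = x \<and> y' = y" if pr: "parR g x' y'" for x' y'
  proof -
    obtain a' b' c' d' where h: "quotient_of x' = (a', b')" "quotient_of y' = (c', d')" "b' * c' - a' * d' = 1"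
      "a' + c' = P" "b' + d' = Q" "0 < b'" "0 < d'"
      using parR_char[OF pr gq] by blast
    have "Q * c' - P * d' = 1" using h by (auto simp: algebra_simps)
    then have "c' = c \<and> d' = d" using unique_cd[OF cop Q0 _ _ _ e] h d0 by auto
    then have "a' = a" "b' = b" using h \<open>a = P - c\<close> \<open>b = Q - d\<close> by auto
    then show ?thesis using h \<open>c' = c \<and> d' = d\<close> qx qy by (metis quotient_of_inject_eq)
  qed
  have lp: "left_parent g = x" unfolding left_parent_alt
    using R uniq by (intro the_equality) blast+
  have rp: "right_parent g = y" unfolding right_parent_alt
    using R uniq by (intro the_equality) blast+
  show ?thesis
    apply (rule that[of a b c d])
    using lp rp qx qy Pb e det d0 d1 b1 c1 a0 R
    by (auto simp: a_def b_def parR_def)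
qed


definition up_dig :: "real \<Rightarrow> nat \<Rightarrow> nat" where
  "up_dig x i = nat (\<lceil>real (Suc i) * x\<rceil> - \<lceil>real i * x\<rceil>)"

definition lo_dig :: "real \<Rightarrow> nat \<Rightarrow> nat" where
  "lo_dig x i = nat (\<lfloor>real (Suc i) * x\<rfloor> - \<lfloor>real i * x\<rfloor>)"

definition Wd :: "rat \<Rightarrow> nat list" where
  "Wd q = map (up_dig (of_rat q)) [0..<nat (snd (quotient_of q))]"

definition Lw :: "rat \<Rightarrow> nat list" where
  "Lw q = map (lo_dig (of_rat q)) [0..<nat (snd (quotient_of q))]"

lemma of_rat_quot: "quotient_of q = (P, Q) \<Longrightarrow> (of_rat q :: real) = of_int P / of_int Q"
  using quotient_of_div[of q P Q] by (simp add: of_rat_divide)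

lemma mul_quot: "quotient_of q = (P, Q) \<Longrightarrow> real i * of_rat q = of_int (int i * P) / of_int Q"
  using of_rat_quot[of q P Q] by simp

lemma sign_lem1: "(0::int) < d \<Longrightarrow> d * X = Y \<Longrightarrow> 0 \<le> Y \<Longrightarrow> 0 \<le> X"
  by (metis zero_le_mult_iff linorder_not_le)
lemma sign_lem2: "(0::int) < d \<Longrightarrow> d * X = Y \<Longrightarrow> Y < 0 \<Longrightarrow> X < 0"
  by (metis mult_less_0_iff linorder_not_le order_less_imp_le)

lemma I1:
  fixes P Q c d i m :: int
  assumes e: "Q * c - P * d = 1" and d: "0 < d" "d < Q" and i: "0 \<le> i" "i \<le> d"
    and m1: "(m - 1) * d < i * c" and m2: "i * c \<le> m * d"
  shows "(m - 1) * Q < i * P \<and> i * P \<le> m * Q"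
proof -
  have id1: "d * (m * Q - i * P) = Q * (m * d - i * c) + i * (Q * c - P * d)" by (simp add: algebra_simps)
  have id2: "d * ((m - 1) * Q - i * P) = Q * ((m - 1) * d - i * c) + i * (Q * c - P * d)"
    by (simp add: algebra_simps)
  have Q: "0 < Q" using d by simp
  have "0 \<le> Q * (m * d - i * c)" using Q m2 by simp
  then have "0 \<le> m * Q - i * P" using sign_lem1[OF d(1) id1] e i by simp
  moreover have "Q * ((m - 1) * d - i * c) \<le> Q * (-1)" using Q m1 by (intro mult_left_mono) auto
  then have "(m - 1) * Q - i * P < 0" using sign_lem2[OF d(1) id2] e i d by simp
  ultimately show ?thesis by simp
qed

lemma I2:
  fixes P Q a b c d j m :: int
  assumes e1: "P * b - a * Q = 1" and e2: "Q * c - P * d = 1" and b: "0 < b" "b < Q"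
    and j: "0 \<le> j" "j \<le> b"
    and m1: "(m - 1) * b < j * a" and m2: "j * a \<le> m * b"
  shows "(c + m - 1) * Q < (d + j) * P \<and> (d + j) * P \<le> (c + m) * Q"
proof -
  have id1: "b * ((c + m) * Q - (d + j) * P) = b * (Q * c - P * d) + Q * (m * b - j * a) - j * (P * b - a * Q)"
    by (simp add: algebra_simps)
  have id2: "b * ((c + m - 1) * Q - (d + j) * P) = b * (Q * c - P * d) + Q * ((m - 1) * b - j * a) - j * (P * b - a * Q)"
    by (simp add: algebra_simps)
  have Q: "0 < Q" using b by simp
  have "0 \<le> Q * (m * b - j * a)" using Q m2 by simp
  then have "0 \<le> (c + m) * Q - (d + j) * P" using sign_lem1[OF b(1) id1] e1 e2 j by simp
  moreover have "Q * ((m - 1) * b - j * a) \<le> Q * (-1)" using Q m1 by (intro mult_left_mono) auto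
  then have "(c + m - 1) * Q - (d + j) * P < 0" using sign_lem2[OF b(1) id2] e1 e2 j b by simp
  ultimately show ?thesis by simp
qed

lemma ceil_R1:
  fixes P Q c d :: int
  assumes e: "Q * c - P * d = 1" and d: "0 < d" "d < Q" and i: "i \<le> nat d"
  shows "\<lceil>(of_int (int i * P) / of_int Q :: real)\<rceil> = \<lceil>(of_int (int i * c) / of_int d :: real)\<rceil>"
proof -
  define m where "m = \<lceil>(of_int (int i * c) / of_int d :: real)\<rceil>"
  have h: "(m - 1) * d < int i * c \<and> int i * c \<le> m * d" using ceil_elim[OF d(1), of "int i * c"] unfolding m_def .
  have "(m - 1) * Q < int i * P \<and> int i * P \<le> m * Q"
    using I1[OF e d, of "int i" m] h i d by auto
  then show ?thesis unfolding m_def[symmetric] using d by (intro ceil_intro) auto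
qed

lemma ceil_R2:
  fixes P Q a b c d :: int
  assumes e1: "P * b - a * Q = 1" and e2: "Q * c - P * d = 1" and b: "0 < b" "b < Q" and d: "0 < d"
    and j: "j \<le> nat b"
  shows "\<lceil>(of_int (int (nat d + j) * P) / of_int Q :: real)\<rceil> = c + \<lceil>(of_int (int j * a) / of_int b :: real)\<rceil>"
proof -
  define m where "m = \<lceil>(of_int (int j * a) / of_int b :: real)\<rceil>"
  have h: "(m - 1) * b < int j * a \<and> int j * a \<le> m * b" using ceil_elim[OF b(1), of "int j * a"] unfolding m_def .
  have "(c + m - 1) * Q < (d + int j) * P \<and> (d + int j) * P \<le> (c + m) * Q"
    using I2[OF e1 e2 b, of "int j" m] h j b by auto
  moreover have "int (nat d + j) = d + int j" using d by simp
  ultimately show ?thesis unfolding m_def[symmetric] using b by (intro ceil_intro) auto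
qed


lemma Wd_0: "Wd 0 = [0]" by (simp add: Wd_def up_dig_def)
lemma Wd_1: "Wd 1 = [1]" by (simp add: Wd_def up_dig_def)

lemma Wd_rec:
  assumes g0: "0 < g" and g1: "g < 1"
  shows "Wd g = Wd (right_parent g) @ Wd (left_parent g)"
proof -
  obtain P Q where gq: "quotient_of g = (P, Q)" by (cases "quotient_of g")
  obtain a b c d where lq: "quotient_of (left_parent g) = (a, b)" and rq: "quotient_of (right_parent g) = (c, d)"
    and e1: "P * b - a * Q = 1" and e2: "Q * c - P * d = 1" and det: "b * c - a * d = 1"
    and ac: "a + c = P" and bd: "b + d = Q" and a0: "0 \<le> a" and b0: "0 < b" and c0: "0 < c" and d0: "0 < d"
    by (rule parents[OF g0 g1 gq])
  have Q: "0 < Q" using b0 d0 bd by simp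
  have bQ: "b < Q" "d < Q" using b0 d0 bd by simp_all
  have R1: "\<lceil>real i * of_rat g\<rceil> = \<lceil>real i * of_rat (right_parent g)\<rceil>" if "i \<le> nat d" for i
    unfolding mul_quot[OF gq] mul_quot[OF rq] using ceil_R1[OF e2 d0 bQ(2) that] by simp
  have R2: "\<lceil>real (nat d + j) * of_rat g\<rceil> = c + \<lceil>real j * of_rat (left_parent g)\<rceil>" if "j \<le> nat b" for j
    unfolding mul_quot[OF gq] mul_quot[OF lq] using ceil_R2[OF e1 e2 b0 bQ(1) d0 that] d0 by simp
  have len: "nat d + nat b = nat Q" using bd b0 d0 by simp
  show ?thesis
  proof (rule nth_equalityI)
    show "length (Wd g) = length (Wd (right_parent g) @ Wd (left_parent g))"
      using len gq lq rq by (simp add: Wd_def)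
    fix i assume "i < length (Wd g)"
    then have i: "i < nat Q" using gq by (simp add: Wd_def)
    show "Wd g ! i = (Wd (right_parent g) @ Wd (left_parent g)) ! i"
    proof (cases "i < nat d")
      case True
      have "Wd g ! i = up_dig (of_rat g) i" using i gq by (simp add: Wd_def)
      also have "\<dots> = up_dig (of_rat (right_parent g)) i"
        unfolding up_dig_def using R1[of i] R1[of "Suc i"] True by simp
      also have "\<dots> = (Wd (right_parent g) @ Wd (left_parent g)) ! i"
        using True rq by (simp add: Wd_def nth_append)
      finally show ?thesis .
    next
      case False
      define j where "j = i - nat d"
      have ij: "i = nat d + j" "j < nat b" using False i len unfolding j_def by auto
      have "Wd g ! i = up_dig (of_rat g) (nat d + j)" using i gq ij by (simp add: Wd_def)
      also have "\<dots> = up_dig (of_rat (left_parent g)) j"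
      proof -
        have "real (Suc (nat d + j)) = real (nat d + Suc j)" by simp
        then show ?thesis unfolding up_dig_def using R2[of j] R2[of "Suc j"] ij by simp
      qed
      also have "\<dots> = (Wd (right_parent g) @ Wd (left_parent g)) ! i"
        using ij rq lq by (simp add: Wd_def nth_append)
      finally show ?thesis .
    qed
  qed
qed

lemma aux_eq:
  "0 < n \<Longrightarrow> 0 \<le> q \<Longrightarrow> q \<le> 1 \<Longrightarrow> nat (snd (quotient_of q)) \<le> n \<Longrightarrow> farey_word_aux n q = Wd q"
proof (induction n arbitrary: q)
  case 0 then show ?case by simp
next
  case (Suc n)
  show ?case
  proof (cases "q = 0 \<or> q = 1")
    case True
    then show ?thesis using Wd_0 Wd_1 by auto
  next
    case False
    then have g0: "0 < q" and g1: "q < 1" using Suc.prems by auto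
    obtain P Q where gq: "quotient_of q = (P, Q)" by (cases "quotient_of q")
    obtain a b c d where lq: "quotient_of (left_parent q) = (a, b)" and rq: "quotient_of (right_parent q) = (c, d)"
      and bd: "b + d = Q" and b0: "0 < b" and d0: "0 < d"
      and l0: "0 \<le> left_parent q" and r1: "right_parent q \<le> 1" and lr: "left_parent q < right_parent q"
      by (rule parents[OF g0 g1 gq])
    have nQ: "nat Q \<le> Suc n" using Suc.prems gq by simp
    have n0: "0 < n" using nQ bd b0 d0 by linarith
    have nb: "nat b \<le> n" "nat d \<le> n" using nQ bd b0 d0 by linarith+
    have "farey_word_aux n (right_parent q) = Wd (right_parent q)"
      using Suc.IH[OF n0, of "right_parent q"] l0 lr r1 nb rq by simp
    moreover have "farey_word_aux n (left_parent q) = Wd (left_parent q)"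
      using Suc.IH[OF n0, of "left_parent q"] l0 lr r1 nb lq by simp
    ultimately show ?thesis using False Wd_rec[OF g0 g1] by simp
  qed
qed

lemma farey_word_eq: "0 \<le> q \<Longrightarrow> q \<le> 1 \<Longrightarrow> farey_word q = Wd q"
  unfolding farey_word_def
  using aux_eq[of "nat (snd (quotient_of q))" q] quotient_of_denom_pos'[of q] by simp


lemma real_nat_Q_mul: "quotient_of q = (P, Q) \<Longrightarrow> real (nat Q) * of_rat q = of_int P"
  using of_rat_quot[of q P Q] quotient_of_denom_pos[of q P Q] by simp

lemma up_dig_period:
  assumes "quotient_of q = (P, Q)"
  shows "up_dig (of_rat q) (k + nat Q * t) = up_dig (of_rat q) k"
proof -
  have e: "real (m + nat Q * t) * of_rat q = real m * of_rat q + of_int (P * int t)" for m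
    using real_nat_Q_mul[OF assms] by (simp add: algebra_simps)
  have c1: "\<lceil>real (Suc k + nat Q * t) * of_rat q\<rceil> = \<lceil>real (Suc k) * (of_rat q::real)\<rceil> + P * int t"
    unfolding e by (rule ceiling_add_of_int)
  have c2: "\<lceil>real (k + nat Q * t) * of_rat q\<rceil> = \<lceil>real k * (of_rat q::real)\<rceil> + P * int t"
    unfolding e by (rule ceiling_add_of_int)
  have "Suc (k + nat Q * t) = Suc k + nat Q * t" by simp
  then show ?thesis unfolding up_dig_def using c1 c2 by simp
qed

lemma lo_dig_period:
  assumes "quotient_of q = (P, Q)"
  shows "lo_dig (of_rat q) (k + nat Q * t) = lo_dig (of_rat q) k"
proof -
  have e: "real (m + nat Q * t) * of_rat q = real m * of_rat q + of_int (P * int t)" for m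
    using real_nat_Q_mul[OF assms] by (simp add: algebra_simps)
  have c1: "\<lfloor>real (Suc k + nat Q * t) * of_rat q\<rfloor> = \<lfloor>real (Suc k) * (of_rat q::real)\<rfloor> + P * int t"
    unfolding e by (rule floor_add_int[symmetric])
  have c2: "\<lfloor>real (k + nat Q * t) * of_rat q\<rfloor> = \<lfloor>real k * (of_rat q::real)\<rfloor> + P * int t"
    unfolding e by (rule floor_add_int[symmetric])
  have "Suc (k + nat Q * t) = Suc k + nat Q * t" by simp
  then show ?thesis unfolding lo_dig_def using c1 c2 by simp
qed

lemma up_dig_mod: "quotient_of q = (P, Q) \<Longrightarrow> up_dig (of_rat q) (i mod nat Q) = up_dig (of_rat q) i"
  using up_dig_period[of q P Q "i mod nat Q" "i div nat Q"] by simp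

lemma lo_dig_mod: "quotient_of q = (P, Q) \<Longrightarrow> lo_dig (of_rat q) (i mod nat Q) = lo_dig (of_rat q) i"
  using lo_dig_period[of q P Q "i mod nat Q" "i div nat Q"] by simp

lemma len_Wd: "length (Wd q) = nat (snd (quotient_of q))" by (simp add: Wd_def)
lemma len_Lw: "length (Lw q) = nat (snd (quotient_of q))" by (simp add: Lw_def)
lemma nth_Wd: "j < nat (snd (quotient_of q)) \<Longrightarrow> Wd q ! j = up_dig (of_rat q) j" by (simp add: Wd_def)
lemma nth_Lw: "j < nat (snd (quotient_of q)) \<Longrightarrow> Lw q ! j = lo_dig (of_rat q) j" by (simp add: Lw_def)

lemma per_seq_Wd: "per_seq (Wd q) i = up_dig (of_rat q) i"
proof -
  obtain P Q where gq: "quotient_of q = (P, Q)" by (cases "quotient_of q")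
  have Q: "0 < nat Q" using quotient_of_denom_pos[OF gq] by simp
  show ?thesis unfolding per_seq_def len_Wd gq using nth_Wd[of "i mod nat Q" q] gq Q up_dig_mod[OF gq] by simp
qed

lemma up_dig_sum:
  assumes x: "0 \<le> x"
  shows "(\<Sum>j<i. int (up_dig x (k + j))) = \<lceil>real (k + i) * x\<rceil> - \<lceil>real k * x\<rceil>"
proof (induction i)
  case 0 then show ?case by simp
next
  case (Suc i)
  have "\<lceil>real (k + i) * x\<rceil> \<le> \<lceil>real (Suc (k + i)) * x\<rceil>"
    using x by (intro ceiling_mono mult_right_mono) auto
  then show ?case using Suc by (simp add: up_dig_def)
qed

lemma lo_dig_sum:
  assumes x: "0 \<le> x"
  shows "(\<Sum>j<i. int (lo_dig x j)) = \<lfloor>real i * x\<rfloor>"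
proof (induction i)
  case 0 then show ?case by simp
next
  case (Suc i)
  have "\<lfloor>real i * x\<rfloor> \<le> \<lfloor>real (Suc i) * x\<rfloor>"
    using x by (intro floor_mono mult_right_mono) auto
  then show ?case using Suc by (simp add: lo_dig_def)
qed

lemma PS_Wd:
  assumes "0 \<le> q"
  shows "PS (per_seq (Wd q)) n = of_int \<lceil>real n * of_rat q\<rceil>"
proof -
  have x: "0 \<le> (of_rat q :: real)" using assms by simp
  have A: "(\<Sum>j<n. int (up_dig (of_rat q) j)) = \<lceil>real n * (of_rat q::real)\<rceil>"
    using up_dig_sum[OF x, where i=n and k=0] by simp
  have "of_int (\<Sum>j<n. int (up_dig (of_rat q) j)) = (of_int \<lceil>real n * (of_rat q::real)\<rceil> :: real)"
    using A by simp
  then show ?thesis unfolding PS_def per_seq_Wd by simp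
qed

lemma rot_to_lower:
  assumes q0: "0 \<le> q" and q1: "q < 1" and gq: "quotient_of q = (P, Q)"
  shows "\<exists>k < nat Q. \<forall>i. up_dig (of_rat q) (k + i) = lo_dig (of_rat q) i"
proof -
  have Q: "0 < Q" using quotient_of_denom_pos[OF gq] .
  have x: "(of_rat q :: real) = of_int P / of_int Q" using of_rat_quot[OF gq] .
  show ?thesis
  proof (cases "P = 0")
    case True
    then have "(of_rat q :: real) = 0" using x by simp
    then show ?thesis using Q by (intro exI[of _ 0]) (simp add: up_dig_def lo_dig_def)
  next
    case False
    have cop: "coprime P Q" using quotient_of_coprime[OF gq] .
    obtain u v where uv: "u * P + v * Q = 1"
      using bezout_int[of P Q] cop by (auto simp: coprime_iff_gcd_eq_1)
    define k0 where "k0 = u mod Q"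
    define t where "t = - v - (u div Q) * P"
    have dm: "u = Q * (u div Q) + k0" unfolding k0_def by simp
    have kP: "k0 * P = 1 + Q * t"
    proof -
      have k0e: "k0 = u - Q * (u div Q)" using dm by linarith
      have "k0 * P = u * P - Q * (u div Q) * P" unfolding k0e by (simp add: algebra_simps)
      also have "\<dots> = 1 + Q * t" using uv unfolding t_def by (simp add: algebra_simps)
      finally show ?thesis .
    qed
    have k0r: "0 \<le> k0" "k0 < Q" unfolding k0_def using Q by auto
    define k where "k = nat k0"
    have kk: "int k = k0" unfolding k_def using k0r by simp
    have C: "\<lceil>real (k + i) * of_rat q\<rceil> = \<lfloor>real i * of_rat q\<rfloor> + 1 + t" for i
    proof -
      have "real (k + i) * (of_rat q :: real) = of_int (int i * P + 1) / of_int Q + of_int t"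
      proof -
        have "real (k + i) * (of_rat q :: real) = of_int ((k0 + int i) * P) / of_int Q"
          unfolding x using kk by (simp add: of_nat_add)
        also have "(k0 + int i) * P = (int i * P + 1) + Q * t" using kP by (simp add: algebra_simps)
        also have "(of_int ((int i * P + 1) + Q * t) :: real) / of_int Q = of_int (int i * P + 1) / of_int Q + of_int t"
          using Q by (simp add: field_simps)
        finally show ?thesis .
      qed
      then have "\<lceil>real (k + i) * (of_rat q :: real)\<rceil> = \<lceil>(of_int (int i * P + 1) / of_int Q :: real)\<rceil> + t"
        by simp
      also have "\<lceil>(of_int (int i * P + 1) / of_int Q :: real)\<rceil> = (int i * P) div Q + 1"
        using ceil_succ_div[OF Q, of "int i * P"] by simp
      also have "(int i * P) div Q = \<lfloor>real i * of_rat q\<rfloor>"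
        unfolding x using floor_divide_of_int_eq[of "int i * P" Q, where 'a=real] by simp
      finally show ?thesis by simp
    qed
    have "\<forall>i. up_dig (of_rat q) (k + i) = lo_dig (of_rat q) i"
    proof
      fix i
      have "Suc (k + i) = k + Suc i" by simp
      then show "up_dig (of_rat q) (k + i) = lo_dig (of_rat q) i"
        unfolding up_dig_def lo_dig_def using C[of i] C[of "Suc i"] by simp
    qed
    moreover have "k < nat Q" unfolding k_def using k0r by simp
    ultimately show ?thesis by blast
  qed
qed

lemma fl_ceil: "\<lfloor>a::real\<rfloor> \<le> \<lceil>a + b\<rceil> - \<lceil>b\<rceil>"
proof -
  have h: "(of_int \<lfloor>a\<rfloor> :: real) < of_int \<lceil>a + b\<rceil> - of_int \<lceil>b\<rceil> + 1"
    using le_of_int_ceiling[of "a + b"] ceiling_correct[of b] of_int_floor_le[of a] by linarith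
  have "(of_int \<lfloor>a\<rfloor> :: real) < of_int (\<lceil>a + b\<rceil> - \<lceil>b\<rceil> + 1)" using h by simp
  then have "\<lfloor>a\<rfloor> < \<lceil>a + b\<rceil> - \<lceil>b\<rceil> + 1" by (simp only: of_int_less_iff)
  then show ?thesis by simp
qed

lemma fl_add_lower: "\<lfloor>a::real\<rfloor> \<le> \<lfloor>a + b\<rfloor> - \<lfloor>b\<rfloor>"
  using le_floor_add[of a b] by simp

lemma fl_add_upper: "\<lfloor>a + b\<rfloor> - \<lfloor>b\<rfloor> \<le> \<lceil>a::real\<rceil>"
proof -
  have h: "(of_int \<lfloor>a + b\<rfloor> :: real) < of_int \<lceil>a\<rceil> + of_int \<lfloor>b\<rfloor> + 1"
    using le_of_int_ceiling[of a] floor_correct[of b] of_int_floor_le[of "a + b"] by linarith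
  have "(of_int \<lfloor>a + b\<rfloor> :: real) < of_int (\<lceil>a\<rceil> + \<lfloor>b\<rfloor> + 1)" using h by simp
  then have "\<lfloor>a + b\<rfloor> < \<lceil>a\<rceil> + \<lfloor>b\<rfloor> + 1" by (simp only: of_int_less_iff)
  then show ?thesis by simp
qed

lemma lex_less_asym: "lex_less u v \<Longrightarrow> lex_less v u \<Longrightarrow> False"
proof -
  assume "lex_less u v" "lex_less v u"
  then obtain i j where i: "i < length u" "i < length v" "take i u = take i v" "u ! i < v ! i"
    and j: "j < length v" "j < length u" "take j v = take j u" "v ! j < u ! j"
    unfolding lex_less_def by blast
  show False
  proof (cases i j rule: linorder_cases)
    case less
    then have "take j v ! i = v ! i" "take j u ! i = u ! i" by simp_all
    then show False using j(3) i(4) by simp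
  next
    case equal then show False using i j by simp
  next
    case greater
    then have "take i v ! j = v ! j" "take i u ! j = u ! j" by simp_all
    then show False using i(3) j(4) by simp
  qed
qed

lemma lex_less_by_sums:
  assumes len: "length u = length v"
    and sums: "\<And>i. i \<le> length u \<Longrightarrow> (\<Sum>j<i. int (u ! j)) \<le> (\<Sum>j<i. int (v ! j))"
    and ne: "u \<noteq> v"
  shows "lex_less u v"
proof -
  have ex: "\<exists>i. i < length u \<and> u ! i \<noteq> v ! i" using len ne nth_equalityI by blast
  define i where "i = (LEAST i. i < length u \<and> u ! i \<noteq> v ! i)"
  have i: "i < length u" "u ! i \<noteq> v ! i" using LeastI_ex[OF ex] unfolding i_def by auto
  have before: "u ! j = v ! j" if "j < i" for j
    using not_less_Least[of j "\<lambda>i. i < length u \<and> u ! i \<noteq> v ! i"] that i unfolding i_def[symmetric] by auto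
  have tk: "take i u = take i v" using before i len by (intro nth_equalityI) auto
  have eqs: "(\<Sum>j<i. int (u ! j)) = (\<Sum>j<i. int (v ! j))" using before by (intro sum.cong) auto
  have "(\<Sum>j<Suc i. int (u ! j)) \<le> (\<Sum>j<Suc i. int (v ! j))" using sums[of "Suc i"] i by simp
  then have "u ! i \<le> v ! i" using eqs by simp
  then have "u ! i < v ! i" using i by simp
  then show ?thesis unfolding lex_less_def using i len tk by auto
qed

lemma min_rot_Wd:
  assumes q0: "0 \<le> q" and q1: "q < 1"
  shows "min_rot (Wd q) = Lw q"
proof -
  obtain P Q where gq: "quotient_of q = (P, Q)" by (cases "quotient_of q")
  let ?x = "(of_rat q :: real)"
  have x: "0 \<le> ?x" using q0 by simp
  let ?R = "{rotate k (Wd q) | k. k < length (Wd q)}"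
  have lenW: "length (Wd q) = nat Q" using gq by (simp add: len_Wd)
  have lenL: "length (Lw q) = nat Q" using gq by (simp add: len_Lw)
  have rot_nth: "rotate k (Wd q) ! i = up_dig ?x (k + i)" if "i < nat Q" for k i
  proof -
    have "rotate k (Wd q) ! i = Wd q ! ((k + i) mod nat Q)" using nth_rotate[of i "Wd q" k] that lenW by simp
    also have "\<dots> = up_dig ?x ((k + i) mod nat Q)"
      using nth_Wd[of "(k + i) mod nat Q" q] gq that by simp
    also have "\<dots> = up_dig ?x (k + i)" using up_dig_mod[OF gq] .
    finally show ?thesis .
  qed
  obtain k where k: "k < nat Q" "\<And>i. up_dig ?x (k + i) = lo_dig ?x i"
    using rot_to_lower[OF q0 q1 gq] by blast
  have LinR: "Lw q \<in> ?R"
  proof -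
    have "rotate k (Wd q) = Lw q"
      by (rule nth_equalityI) (use lenW lenL rot_nth k gq in \<open>auto simp: nth_Lw\<close>)
    then have "Lw q = rotate k (Wd q) \<and> k < length (Wd q)" using k lenW by simp
    then show ?thesis by blast
  qed
  have Lmin: "lex_less (Lw q) v" if vR: "v \<in> ?R" and vne: "v \<noteq> Lw q" for v
  proof -
    obtain k' where v: "v = rotate k' (Wd q)" using vR by blast
    show ?thesis
    proof (rule lex_less_by_sums)
      show "length (Lw q) = length v" using v lenW lenL by simp
      show "Lw q \<noteq> v" using vne by simp
      fix i assume i: "i \<le> length (Lw q)"
      have "(\<Sum>j<i. int (Lw q ! j)) = (\<Sum>j<i. int (lo_dig ?x j))"
        using i lenL gq by (intro sum.cong) (auto simp: nth_Lw)
      also have "\<dots> = \<lfloor>real i * ?x\<rfloor>" using lo_dig_sum[OF x] .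
      also have "\<dots> \<le> \<lceil>real (k' + i) * ?x\<rceil> - \<lceil>real k' * ?x\<rceil>"
        using fl_ceil[of "real i * ?x" "real k' * ?x"] by (simp add: algebra_simps)
      also have "\<dots> = (\<Sum>j<i. int (up_dig ?x (k' + j)))" using up_dig_sum[OF x] by simp
      also have "\<dots> = (\<Sum>j<i. int (v ! j))"
        using i lenL v rot_nth by (intro sum.cong) auto
      finally show "(\<Sum>j<i. int (Lw q ! j)) \<le> (\<Sum>j<i. int (v ! j))" .
    qed
  qed
  show ?thesis unfolding min_rot_def
  proof (rule the_equality)
    show "Lw q \<in> ?R \<and> (\<forall>v\<in>?R. v \<noteq> Lw q \<longrightarrow> lex_less (Lw q) v)" using LinR Lmin by blast
    fix u assume u: "u \<in> ?R \<and> (\<forall>v\<in>?R. v \<noteq> u \<longrightarrow> lex_less u v)"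
    show "u = Lw q"
    proof (rule ccontr)
      assume ne: "u \<noteq> Lw q"
      then have "lex_less u (Lw q)" using u LinR by auto
      moreover have "lex_less (Lw q) u" using Lmin u ne by auto
      ultimately show False using lex_less_asym by blast
    qed
  qed
qed


definition Mset :: "nat set \<Rightarrow> real \<Rightarrow> real \<Rightarrow> int set" where
  "Mset S A L = {m::int. A \<le> of_int m \<and> of_int m < A + L \<and> (\<forall>p\<in>S. \<not> int p dvd m)}"

lemma Mset_sub: "Mset S A L \<subseteq> {\<lceil>A\<rceil>..<\<lceil>A + L\<rceil>}"
  unfolding Mset_def by (auto simp: ceiling_le_iff less_ceiling_iff)

lemma Mset_fin: "finite (Mset S A L)"
  using finite_subset[OF Mset_sub] by simp

lemma Mset_base:
  assumes L: "0 \<le> L"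
  shows "\<bar>real (card (Mset {} A L)) - L\<bar> \<le> 1"
proof -
  have "Mset {} A L = {\<lceil>A\<rceil>..<\<lceil>A + L\<rceil>}"
    unfolding Mset_def by (auto simp: ceiling_le_iff less_ceiling_iff)
  then have c: "card (Mset {} A L) = nat (\<lceil>A + L\<rceil> - \<lceil>A\<rceil>)" by simp
  have mono: "\<lceil>A\<rceil> \<le> \<lceil>A + L\<rceil>" using L by (intro ceiling_mono) simp
  have r: "real (card (Mset {} A L)) = of_int \<lceil>A + L\<rceil> - of_int \<lceil>A\<rceil>"
    unfolding c using mono by simp
  have "A + L \<le> of_int \<lceil>A + L\<rceil>" "of_int \<lceil>A + L\<rceil> < A + L + 1"
    "A \<le> of_int \<lceil>A\<rceil>" "of_int \<lceil>A\<rceil> < A + 1"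
    using ceiling_correct[of "A + L"] ceiling_correct[of A] by linarith+
  then show ?thesis unfolding r by linarith
qed

lemma Mset_step:
  assumes p: "prime p" and pS: "p \<notin> S" and S: "\<forall>q\<in>S. prime q"
  shows "real (card (Mset (insert p S) A L)) = real (card (Mset S A L)) - real (card (Mset S (A / p) (L / p)))"
proof -
  have p0: "(0::real) < real p" using p prime_gt_0_nat by simp
  define D where "D = {m \<in> Mset S A L. int p dvd m}"
  have ins: "Mset (insert p S) A L = Mset S A L - D" unfolding Mset_def D_def by auto
  have DM: "D \<subseteq> Mset S A L" unfolding D_def by auto
  have img: "D = (\<lambda>j. int p * j) ` Mset S (A / p) (L / p)"
  proof (rule set_eqI, rule iffI)
    fix m assume "m \<in> D"
    then have m: "A \<le> of_int m" "of_int m < A + L" "\<forall>q\<in>S. \<not> int q dvd m" "int p dvd m"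
      unfolding D_def Mset_def by auto
    obtain j where j: "m = int p * j" using m(4) by (auto simp: dvd_def)
    have "A / p \<le> of_int j" using m(1) p0 unfolding j by (simp add: divide_le_eq mult.commute)
    moreover have "of_int j < A / p + L / p" using m(2) p0 unfolding j
      by (simp add: add_divide_distrib[symmetric] less_divide_eq mult.commute)
    moreover have "\<forall>q\<in>S. \<not> int q dvd j" using m(3) unfolding j by (auto intro: dvd_mult)
    ultimately show "m \<in> (\<lambda>j. int p * j) ` Mset S (A / p) (L / p)"
      unfolding Mset_def j by auto
  next
    fix m assume "m \<in> (\<lambda>j. int p * j) ` Mset S (A / p) (L / p)"
    then obtain j where j: "m = int p * j" "A / p \<le> of_int j" "of_int j < A / p + L / p" "\<forall>q\<in>S. \<not> int q dvd j"
      unfolding Mset_def by auto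
    have "A \<le> of_int m" using j(2) p0 unfolding j(1) by (simp add: divide_le_eq mult.commute)
    moreover have "of_int m < A + L" using j(3) p0 unfolding j(1)
      by (simp add: add_divide_distrib[symmetric] less_divide_eq mult.commute)
    moreover have "\<forall>q\<in>S. \<not> int q dvd m"
    proof
      fix q assume q: "q \<in> S"
      show "\<not> int q dvd m"
      proof
        assume "int q dvd m"
        moreover have "prime (int q)" using S q by simp
        ultimately have "int q dvd int p \<or> int q dvd j" unfolding j(1) using prime_dvd_mult_iff by blast
        then show False
        proof
          assume "int q dvd int p"
          then have "q dvd p" by simp
          then have "q = p" using primes_dvd_imp_eq[of q p] S q p by simp
          then show False using pS q by simp
        next
          assume "int q dvd j" then show False using j(4) q by simp
        qed
      qed
    qed
    ultimately show "m \<in> D" unfolding D_def Mset_def j(1) by auto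
  qed
  have inj: "inj_on (\<lambda>j. int p * j) (Mset S (A / p) (L / p))" using p0 by (auto simp: inj_on_def)
  have "card D = card (Mset S (A / p) (L / p))" unfolding img using card_image[OF inj] .
  moreover have "card (Mset (insert p S) A L) = card (Mset S A L) - card D"
    unfolding ins using card_Diff_subset[OF finite_subset[OF DM Mset_fin] DM] .
  moreover have "card D \<le> card (Mset S A L)" using card_mono[OF Mset_fin DM] .
  ultimately show ?thesis by (simp add: of_nat_diff)
qed

lemma Mset_count:
  assumes "finite S" "\<forall>p\<in>S. prime p"
  shows "\<And>A L. 0 \<le> L \<Longrightarrow> \<bar>real (card (Mset S A L)) - L * (\<Prod>p\<in>S. 1 - 1 / real p)\<bar> \<le> 2 ^ card S"
  using assms
proof (induction S rule: finite_induct)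
  case empty
  then show ?case using Mset_base by simp
next
  case (insert p S)
  have p: "prime p" and Sp: "\<forall>q\<in>S. prime q" using insert.prems by auto
  have p0: "(0::real) < real p" using p prime_gt_0_nat by simp
  define PrS where "PrS = (\<Prod>p\<in>S. 1 - 1 / real p)"
  have h1: "\<bar>real (card (Mset S A L)) - L * PrS\<bar> \<le> 2 ^ card S"
    using insert.IH[OF insert.prems(1) Sp] unfolding PrS_def .
  have h2: "\<bar>real (card (Mset S (A / p) (L / p))) - (L / p) * PrS\<bar> \<le> 2 ^ card S"
    using insert.IH[of "L / p" "A / p"] insert.prems(1) Sp p0 unfolding PrS_def by simp
  have e: "L * (\<Prod>q\<in>insert p S. 1 - 1 / real q) = L * PrS - (L / p) * PrS"
    using insert.hyps unfolding PrS_def by (simp add: algebra_simps)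
  have "real (card (Mset (insert p S) A L)) - L * (\<Prod>q\<in>insert p S. 1 - 1 / real q) =
        (real (card (Mset S A L)) - L * PrS) - (real (card (Mset S (A / p) (L / p))) - (L / p) * PrS)"
    unfolding e Mset_step[OF p insert.hyps(2) Sp] by simp
  then have "\<bar>real (card (Mset (insert p S) A L)) - L * (\<Prod>q\<in>insert p S. 1 - 1 / real q)\<bar> \<le> 2 ^ card S + 2 ^ card S"
    using h1 h2 by linarith
  then show ?case using insert.hyps by simp
qed


definition pfs :: "nat \<Rightarrow> nat set" where "pfs n = {p. prime p \<and> p dvd n}"

lemma pfs_fin: "0 < n \<Longrightarrow> finite (pfs n)"
  unfolding pfs_def by (rule finite_subset[of _ "{..n}"]) (auto dest: dvd_imp_le)

lemma pfs_1: "pfs 1 = {}" unfolding pfs_def by auto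

definition Gf :: "nat \<Rightarrow> real" where
  "Gf n = real n * (\<Prod>p\<in>pfs n. (real p - 1) / (2 * real p))"

lemma pfs_decomp:
  assumes p: "prime p" and e: "0 < e" and m: "\<not> p dvd m"
  shows "pfs (p ^ e * m) = insert p (pfs m)" "p \<notin> pfs m"
proof -
  show "p \<notin> pfs m" using m by (simp add: pfs_def)
  show "pfs (p ^ e * m) = insert p (pfs m)"
  proof (rule set_eqI)
    fix q
    show "q \<in> pfs (p ^ e * m) \<longleftrightarrow> q \<in> insert p (pfs m)"
    proof
      assume "q \<in> pfs (p ^ e * m)"
      then have q: "prime q" "q dvd p ^ e * m" by (auto simp: pfs_def)
      then have "q dvd p ^ e \<or> q dvd m" using prime_dvd_mult_iff by blast
      then have "q dvd p \<or> q dvd m" using prime_dvd_power[OF q(1)] by blast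
      then have "q = p \<or> q dvd m" using primes_dvd_imp_eq[OF q(1) p] by blast
      then show "q \<in> insert p (pfs m)" using q by (auto simp: pfs_def)
    next
      assume "q \<in> insert p (pfs m)"
      then show "q \<in> pfs (p ^ e * m)" using p e by (auto simp: pfs_def)
    qed
  qed
qed

lemma Gf_bound:
  "0 < n \<Longrightarrow> sqrt (real n) / 4 ^ card (pfs n \<inter> {..<16}) \<le> Gf n"
proof (induction n rule: less_induct)
  case (less n)
  show ?case
  proof (cases "n = 1")
    case True then show ?thesis unfolding True Gf_def pfs_1 by simp
  next
    case False
    obtain p where p: "prime p" "p dvd n" using prime_factor_nat[OF False] by blast
    have nz: "n \<noteq> 0" using less.prems by simp
    have nu: "\<not> is_unit p" using p(1) not_prime_unit by blast
    obtain m where nm: "n = p ^ multiplicity p n * m" and pm: "\<not> p dvd m"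
      using multiplicity_decompose'[OF nz nu] by blast
    define e where "e = multiplicity p n"
    have e0: "0 < e" unfolding e_def using p less.prems
      by (simp add: prime_multiplicity_gt_zero_iff)
    have nm': "n = p ^ e * m" using nm unfolding e_def .
    have m0: "0 < m" using less.prems nm' by (cases m) auto
    have p2: "2 \<le> p" using prime_ge_2_nat[OF p(1)] .
    have ppe: "p \<le> p ^ e" using e0 p2 by (simp add: self_le_power)
    have pe2: "2 \<le> p ^ e" using ppe p2 by linarith
    have "2 * m \<le> p ^ e * m" using pe2 by (intro mult_le_mono1)
    then have mn: "m < n" using m0 nm' by linarith
    have IH: "sqrt (real m) / 4 ^ card (pfs m \<inter> {..<16}) \<le> Gf m" using less.IH[OF mn m0] .
    have dec: "pfs n = insert p (pfs m)" "p \<notin> pfs m" using pfs_decomp[OF p(1) e0 pm] nm' by auto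
    have fin: "finite (pfs m)" using pfs_fin[OF m0] .
    define f where "f = real (p ^ e) * ((real p - 1) / (2 * real p))"
    have pr: "(\<Prod>q\<in>pfs n. (real q - 1) / (2 * real q)) = (real p - 1) / (2 * real p) * (\<Prod>q\<in>pfs m. (real q - 1) / (2 * real q))"
      unfolding dec(1) by (rule prod.insert[OF fin dec(2)])
    have Gn: "Gf n = f * Gf m"
      unfolding Gf_def pr f_def by (subst nm') (simp add: algebra_simps)
    have preal: "2 \<le> real p" using p2 by simp
    have f4: "real (p ^ e) / 4 \<le> f"
    proof -
      have "1 / 4 \<le> (real p - 1) / (2 * real p)" using preal by (simp add: field_simps)
      then show ?thesis unfolding f_def using mult_left_mono[of "1/4" "(real p - 1) / (2 * real p)" "real (p ^ e)"] by simp
    qed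
    have pe1: "1 \<le> real (p ^ e)" using pe2 by linarith
    have sq1: "1 \<le> sqrt (real (p ^ e))" using pe1 by simp
    have sqsq: "sqrt (real (p ^ e)) * sqrt (real (p ^ e)) = real (p ^ e)" using pe1 by simp
    have spe: "sqrt (real (p ^ e)) \<le> real (p ^ e)"
      using mult_left_mono[OF sq1, of "sqrt (real (p ^ e))"] sqsq by simp
    have sqn: "sqrt (real n) = sqrt (real (p ^ e)) * sqrt (real m)"
      using nm' by (simp add: real_sqrt_mult)
    have Gm0: "0 \<le> sqrt (real m) / 4 ^ card (pfs m \<inter> {..<16})" by simp
    define c where "c = card (pfs m \<inter> {..<16})"
    have finc: "finite (pfs m \<inter> {..<16})" using fin by simp
    show ?thesis
    proof (cases "p < 16")
      case True
      have "pfs n \<inter> {..<16} = insert p (pfs m \<inter> {..<16})" using dec True by auto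
      then have cn: "card (pfs n \<inter> {..<16}) = c + 1" unfolding c_def using finc dec(2) by simp
      have "sqrt (real n) / 4 ^ card (pfs n \<inter> {..<16}) =
            (sqrt (real (p ^ e)) / 4) * (sqrt (real m) / 4 ^ c)" unfolding cn sqn by (simp add: field_simps)
      also have "\<dots> \<le> f * Gf m"
      proof (rule mult_mono)
        show "sqrt (real (p ^ e)) / 4 \<le> f" using spe f4 by linarith
        show "sqrt (real m) / 4 ^ c \<le> Gf m" using IH unfolding c_def .
        show "0 \<le> f" using f4 pe1 by linarith
        show "0 \<le> sqrt (real m) / 4 ^ c" by simp
      qed
      finally show ?thesis unfolding Gn .
    next
      case False
      have "pfs n \<inter> {..<16} = pfs m \<inter> {..<16}" using dec False by auto
      then have cn: "card (pfs n \<inter> {..<16}) = c" unfolding c_def by simp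
      have p16: "16 \<le> real (p ^ e)"
      proof -
        have "16 \<le> p ^ e" using False ppe by linarith
        then show ?thesis by linarith
      qed
      have sq4: "4 \<le> sqrt (real (p ^ e))" using p16 real_sqrt_le_mono[OF p16] by simp
      have "sqrt (real (p ^ e)) \<le> real (p ^ e) / 4"
      proof -
        have "4 * sqrt (real (p ^ e)) \<le> sqrt (real (p ^ e)) * sqrt (real (p ^ e))"
          using mult_right_mono[OF sq4, of "sqrt (real (p ^ e))"] by simp
        then show ?thesis using sqsq by simp
      qed
      then have fs: "sqrt (real (p ^ e)) \<le> f" using f4 by linarith
      have "sqrt (real n) / 4 ^ card (pfs n \<inter> {..<16}) = sqrt (real (p ^ e)) * (sqrt (real m) / 4 ^ c)"
        unfolding cn sqn by simp
      also have "\<dots> \<le> f * Gf m"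
      proof (rule mult_mono)
        show "sqrt (real (p ^ e)) \<le> f" by fact
        show "sqrt (real m) / 4 ^ c \<le> Gf m" using IH unfolding c_def .
        show "0 \<le> f" using fs sq1 by linarith
        show "0 \<le> sqrt (real m) / 4 ^ c" by simp
      qed
      finally show ?thesis unfolding Gn .
    qed
  qed
qed

lemma Gf_bound16:
  assumes "0 < n" shows "sqrt (real n) / 4 ^ 16 \<le> Gf n"
proof -
  have "card (pfs n \<inter> {..<16}) \<le> card {..<(16::nat)}" by (intro card_mono) auto
  then have "card (pfs n \<inter> {..<16}) \<le> 16" by simp
  then have "(4::real) ^ card (pfs n \<inter> {..<16}) \<le> 4 ^ 16" by (intro power_increasing) auto
  then have "sqrt (real n) / 4 ^ 16 \<le> sqrt (real n) / 4 ^ card (pfs n \<inter> {..<16})"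
    by (intro divide_left_mono) auto
  then show ?thesis using Gf_bound[OF assms] by linarith
qed

lemma Gf_prod:
  assumes "0 < n"
  shows "real n * (\<Prod>p\<in>pfs n. 1 - 1 / real p) = Gf n * 2 ^ card (pfs n)"
proof -
  have "(\<Prod>p\<in>pfs n. 1 - 1 / real p) = (\<Prod>p\<in>pfs n. (real p - 1) / (2 * real p) * 2)"
  proof (rule prod.cong)
    fix p assume "p \<in> pfs n"
    then have "0 < real p" by (auto simp: pfs_def prime_gt_0_nat)
    then show "1 - 1 / real p = (real p - 1) / (2 * real p) * 2" by (simp add: field_simps)
  qed simp
  also have "\<dots> = (\<Prod>p\<in>pfs n. (real p - 1) / (2 * real p)) * 2 ^ card (pfs n)"
    unfolding prod.distrib prod_constant ..
  finally show ?thesis unfolding Gf_def by simp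
qed

lemma coprime_in_interval:
  assumes d: "0 < \<delta>"
  shows "\<exists>n0. \<forall>n\<ge>n0. \<forall>A. 0 \<le> A \<longrightarrow> (\<exists>m::nat. A \<le> real m \<and> real m < A + \<delta> * real n \<and> coprime m n)"
proof -
  define n0 where "n0 = nat \<lceil>(4 ^ 16 / \<delta>) ^ 2\<rceil> + 1"
  show ?thesis
  proof (rule exI[of _ n0], intro allI impI)
    fix n A assume n: "n0 \<le> n" and A: "0 \<le> (A::real)"
    have n0: "0 < n" using n unfolding n0_def by simp
    have "(4 ^ 16 / \<delta>) ^ 2 < real n" using n unfolding n0_def by linarith
    then have "sqrt ((4 ^ 16 / \<delta>) ^ 2) < sqrt (real n)" by (simp only: real_sqrt_less_iff)
    then have "4 ^ 16 / \<delta> < sqrt (real n)" using d by simp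
    then have "1 < \<delta> * (sqrt (real n) / 4 ^ 16)" using d by (simp add: field_simps)
    also have "\<dots> \<le> \<delta> * Gf n" using Gf_bound16[OF n0] d by (intro mult_left_mono) auto
    finally have dG: "1 < \<delta> * Gf n" .
    define S where "S = pfs n"
    have finS: "finite S" unfolding S_def using pfs_fin[OF n0] .
    have primeS: "\<forall>p\<in>S. prime p" unfolding S_def pfs_def by auto
    have L0: "0 \<le> \<delta> * real n" using d by simp
    have cnt: "\<bar>real (card (Mset S A (\<delta> * real n))) - \<delta> * real n * (\<Prod>p\<in>S. 1 - 1 / real p)\<bar> \<le> 2 ^ card S"
      using Mset_count[OF finS primeS L0] .
    have "\<delta> * real n * (\<Prod>p\<in>S. 1 - 1 / real p) = \<delta> * Gf n * 2 ^ card S"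
      using Gf_prod[OF n0] unfolding S_def by (simp add: mult.assoc)
    moreover have "2 ^ card S < \<delta> * Gf n * 2 ^ card S" using dG by simp
    ultimately have "0 < real (card (Mset S A (\<delta> * real n)))" using cnt by linarith
    then have "Mset S A (\<delta> * real n) \<noteq> {}" by (metis card.empty of_nat_0 less_irrefl)
    then obtain m where m: "m \<in> Mset S A (\<delta> * real n)" by blast
    then have m1: "A \<le> of_int m" "of_int m < A + \<delta> * real n" and m3: "\<forall>p\<in>S. \<not> int p dvd m"
      unfolding Mset_def by auto
    have mpos: "0 \<le> m" using m1 A by linarith
    have "coprime (nat m) n"
    proof (rule ccontr)
      assume nc: "\<not> coprime (nat m) n"
      have "gcd (nat m) n \<noteq> 1" using nc by (simp add: coprime_iff_gcd_eq_1)
      then obtain p where p: "prime p" "p dvd gcd (nat m) n" using prime_factor_nat by blast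
      then have "p dvd n" "p dvd nat m" by auto
      have "int p dvd int (nat m)" using \<open>p dvd nat m\<close> by (simp only: int_dvd_int_iff)
      then have "p \<in> S" "int p dvd m" using p(1) mpos \<open>p dvd n\<close> unfolding S_def pfs_def by auto
      then show False using m3 by blast
    qed
    moreover have "real (nat m) = of_int m" using mpos by simp
    ultimately show "\<exists>m::nat. A \<le> real m \<and> real m < A + \<delta> * real n \<and> coprime m n"
      using m1 by (intro exI[of _ "nat m"]) simp
  qed
qed


lemma lo_dig_le1:
  assumes "0 \<le> \<alpha>" "\<alpha> \<le> 1"
  shows "lo_dig \<alpha> i \<le> 1"
proof -
  have h1: "\<lfloor>\<alpha> + real i * \<alpha>\<rfloor> - \<lfloor>real i * \<alpha>\<rfloor> \<le> \<lceil>\<alpha>\<rceil>" by (rule fl_add_upper)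
  have h2: "\<lceil>\<alpha>\<rceil> \<le> 1" using assms by (simp add: ceiling_le_iff)
  have h: "\<lfloor>\<alpha> + real i * \<alpha>\<rfloor> - \<lfloor>real i * \<alpha>\<rfloor> \<le> 1" using h1 h2 by linarith
  have e: "real (Suc i) * \<alpha> = \<alpha> + real i * \<alpha>" by (simp add: algebra_simps)
  show ?thesis unfolding lo_dig_def e using h by simp
qed

lemma bnd_lo: "0 \<le> \<alpha> \<Longrightarrow> \<alpha> \<le> 1 \<Longrightarrow> bnd (lo_dig \<alpha>)"
  using lo_dig_le1 by (simp add: bnd_def)

lemma PS_shift_lo:
  assumes a: "0 \<le> \<alpha>"
  shows "PS (shift k (lo_dig \<alpha>)) n = of_int (\<lfloor>real (k + n) * \<alpha>\<rfloor> - \<lfloor>real k * \<alpha>\<rfloor>)"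
proof (induction n)
  case 0 then show ?case by (simp add: PS_def)
next
  case (Suc n)
  have mono: "\<lfloor>real (k + n) * \<alpha>\<rfloor> \<le> \<lfloor>real (Suc (k + n)) * \<alpha>\<rfloor>"
    using a by (intro floor_mono mult_right_mono) auto
  have "PS (shift k (lo_dig \<alpha>)) (Suc n) = PS (shift k (lo_dig \<alpha>)) n + real (lo_dig \<alpha> (n + k))"
    by (simp add: PS_Suc shift_def)
  also have "real (lo_dig \<alpha> (n + k)) = of_int (\<lfloor>real (Suc (k + n)) * \<alpha>\<rfloor> - \<lfloor>real (k + n) * \<alpha>\<rfloor>)"
    unfolding lo_dig_def using mono by (simp add: add.commute)
  finally show ?case using Suc by simp
qed

lemma PS_lo: "0 \<le> \<alpha> \<Longrightarrow> PS (lo_dig \<alpha>) n = of_int \<lfloor>real n * \<alpha>\<rfloor>"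
  using PS_shift_lo[of \<alpha> 0 n] by simp

lemma PS_split: "PS s (b + n) = PS s b + PS (shift b s) n"
  by (induction n) (simp_all add: PS_Suc shift_def add.commute)

lemma seqval_zero: "seqval \<beta> (\<lambda>i. 0) = 0" by (simp add: seqval_def)

lemma mech_good:
  fixes \<beta> hi xg \<alpha> :: real and Bs :: "nat \<Rightarrow> nat" and N Qn :: nat and q2 :: rat
  assumes b: "1 < \<beta>" "\<beta> < 2"
    and bndB: "bnd Bs"
    and PSB: "\<And>j. 1 \<le> j \<Longrightarrow> PS Bs j \<le> real j * xg - 1 / real Qn"
    and Qn: "0 < Qn" and N: "0 < N"
    and gap: "hi + 1 / ((\<beta> - 1) * \<beta> ^ N) < seqval \<beta> Bs"
    and al: "xg - 1 / (real N * real Qn) \<le> \<alpha>" "0 \<le> \<alpha>" "\<alpha> \<le> 1"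
    and q2: "\<alpha> \<le> of_rat q2" "0 \<le> q2" "admissible \<beta> (per_seq (Wd q2))"
  shows "hi < seqval \<beta> (shift k (lo_dig \<alpha>)) \<and> seqval \<beta> (shift k (lo_dig \<alpha>)) < 1"
proof
  let ?s = "shift k (lo_dig \<alpha>)"
  have bs: "bnd ?s" using bnd_shift[OF bnd_lo[OF al(2,3)]] .
  define t where "t = per_seq (Wd q2)"
  have tv: "bnd t \<and> seqval \<beta> t < 1" unfolding t_def using admissible_val[OF b q2(3)] .
  have "seqval \<beta> ?s \<le> seqval \<beta> t"
  proof (rule seqval_mono_PS[OF b(1) bs conjunct1[OF tv]])
    fix n
    have "PS ?s n = of_int (\<lfloor>real n * \<alpha> + real k * \<alpha>\<rfloor> - \<lfloor>real k * \<alpha>\<rfloor>)"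
      unfolding PS_shift_lo[OF al(2)] by (simp add: algebra_simps)
    also have "\<dots> \<le> of_int \<lceil>real n * \<alpha>\<rceil>" by (simp only: of_int_le_iff fl_add_upper)
    also have "\<dots> \<le> of_int \<lceil>real n * of_rat q2\<rceil>" using q2(1) by (simp add: ceiling_mono mult_left_mono)
    also have "\<dots> = PS t n" unfolding t_def using PS_Wd[OF q2(2)] by simp
    finally show "PS ?s n \<le> PS t n" .
  qed
  then show "seqval \<beta> ?s < 1" using tv by simp
  define c where "c = (\<lambda>i. if i < N then Bs i else 0)"
  have bc: "bnd c" using bndB by (simp add: bnd_def c_def)
  have PSc: "PS c n = PS Bs (min n N)" for n
  proof (induction n)
    case 0 then show ?case by simp
  next
    case (Suc n)
    then show ?case by (cases "n < N") (simp_all add: PS_Suc c_def min_def)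
  qed
  have cle: "seqval \<beta> c \<le> seqval \<beta> ?s"
  proof (rule seqval_mono_PS[OF b(1) bc bs])
    fix n
    show "PS c n \<le> PS ?s n"
    proof (cases "n = 0")
      case True then show ?thesis by simp
    next
      case False
      define j where "j = min n N"
      have j1: "1 \<le> j" "j \<le> n" "j \<le> N" using False N unfolding j_def by auto
      have "real j * (xg - \<alpha>) \<le> 1 / real Qn"
      proof (cases "xg - \<alpha> \<le> 0")
        case True
        have "real j * (xg - \<alpha>) \<le> 0" using True by (simp add: mult_nonneg_nonpos)
        moreover have "0 \<le> 1 / real Qn" by simp
        ultimately show ?thesis by linarith
      next
        case False
        have "real j * (xg - \<alpha>) \<le> real N * (1 / (real N * real Qn))"
          using False al(1) j1 by (intro mult_mono) auto
        also have "\<dots> = 1 / real Qn" using N by simp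
        finally show ?thesis .
      qed
      then have "PS Bs j \<le> real j * \<alpha>" using PSB[OF j1(1)] by (simp add: algebra_simps)
      moreover have "PS Bs j = of_int (int (\<Sum>i<j. Bs i))" by (simp add: PS_def)
      ultimately have "int (\<Sum>i<j. Bs i) \<le> \<lfloor>real j * \<alpha>\<rfloor>" by (simp add: le_floor_iff)
      also have "\<lfloor>real j * \<alpha>\<rfloor> \<le> \<lfloor>real n * \<alpha>\<rfloor>" using j1 al(2) by (intro floor_mono mult_right_mono) auto
      also have "\<lfloor>real n * \<alpha>\<rfloor> \<le> \<lfloor>real n * \<alpha> + real k * \<alpha>\<rfloor> - \<lfloor>real k * \<alpha>\<rfloor>" by (rule fl_add_lower)
      finally have "of_int (int (\<Sum>i<j. Bs i)) \<le> (of_int (\<lfloor>real n * \<alpha> + real k * \<alpha>\<rfloor> - \<lfloor>real k * \<alpha>\<rfloor>) :: real)"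
        by (simp only: of_int_le_iff)
      then show ?thesis unfolding PSc j_def[symmetric] PS_shift_lo[OF al(2)]
        by (simp add: PS_def algebra_simps)
    qed
  qed
  have "seqval \<beta> Bs - 1 / ((\<beta> - 1) * \<beta> ^ N) \<le> seqval \<beta> c"
  proof -
    have sB: "seqval \<beta> Bs = (\<Sum>i<N. real (Bs i) / \<beta> ^ Suc i) + seqval \<beta> (shift N Bs) / \<beta> ^ N"
      using seqval_split[OF b(1) bndB] .
    have sc: "seqval \<beta> c = (\<Sum>i<N. real (c i) / \<beta> ^ Suc i) + seqval \<beta> (shift N c) / \<beta> ^ N"
      using seqval_split[OF b(1) bc] .
    have sh: "shift N c = (\<lambda>i. 0)" by (auto simp: shift_def c_def)
    have sc': "seqval \<beta> c = (\<Sum>i<N. real (Bs i) / \<beta> ^ Suc i)" unfolding sc sh seqval_zero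
      by (simp add: c_def)
    have "seqval \<beta> (shift N Bs) \<le> 1 / (\<beta> - 1)" using seqval_le[OF b(1) bnd_shift[OF bndB]] .
    then have "seqval \<beta> (shift N Bs) / \<beta> ^ N \<le> (1 / (\<beta> - 1)) / \<beta> ^ N" using b by (intro divide_right_mono) auto
    then show ?thesis unfolding sB sc' by simp
  qed
  then show "hi < seqval \<beta> ?s" using gap cle by linarith
qed


lemma adm_zero: "1 < \<beta> \<Longrightarrow> admissible \<beta> (\<lambda>i. 0)"
  by (rule adm_from_vals) (auto simp: bnd_def shift_def seqval_zero)

lemma gamma_sup:
  fixes \<beta> \<alpha> :: real and g :: rat
  assumes b: "1 < \<beta>" "\<beta> < 2" and gb: "gamma_beta \<beta> = of_rat g" and al: "\<alpha> < of_rat g"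
  shows "\<exists>q2. \<alpha> < of_rat q2 \<and> 0 \<le> q2 \<and> q2 \<le> 1 \<and> admissible \<beta> (per_seq (Wd q2))"
proof -
  define S where "S = {real_of_rat q | q. 0 \<le> q \<and> q \<le> 1 \<and> admissible \<beta> (per_seq (farey_word q))}"
  have "farey_word 0 = [0]" using farey_word_eq[of 0] Wd_0 by simp
  then have "per_seq (farey_word 0) = (\<lambda>i. 0)" by (auto simp: per_seq_def)
  then have "0 \<in> S" unfolding S_def using adm_zero[OF b(1)] by force
  then have ne: "S \<noteq> {}" by auto
  have bdd: "bdd_above S" unfolding S_def by (rule bdd_aboveI[of _ 1]) (auto simp: of_rat_less_eq)
  have "\<alpha> < Sup S" using al gb unfolding gamma_beta_def S_def by simp
  then obtain y where "y \<in> S" "\<alpha> < y" using less_cSup_iff[OF ne bdd] by blast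
  then show ?thesis unfolding S_def using farey_word_eq by auto
qed

lemma lo_strict:
  assumes b: "1 < \<beta>" and a: "0 \<le> \<alpha>" "\<alpha> < \<alpha>'" "\<alpha>' \<le> 1"
  shows "seqval \<beta> (lo_dig \<alpha>) < seqval \<beta> (lo_dig \<alpha>')"
proof -
  obtain n :: nat where n: "1 / (\<alpha>' - \<alpha>) < real n" using reals_Archimedean2 by blast
  have d: "0 < \<alpha>' - \<alpha>" using a by simp
  have "1 < real n * (\<alpha>' - \<alpha>)" using n d by (simp add: field_simps)
  then have "real n * \<alpha> + 1 \<le> real n * \<alpha>'" by (simp add: algebra_simps)
  then have "\<lfloor>real n * \<alpha> + 1\<rfloor> \<le> \<lfloor>real n * \<alpha>'\<rfloor>" by (rule floor_mono)
  then have lt: "\<lfloor>real n * \<alpha>\<rfloor> < \<lfloor>real n * \<alpha>'\<rfloor>" by simp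
  have a': "0 \<le> \<alpha>'" using a by simp
  show ?thesis
  proof (rule seqval_strict_PS[OF b bnd_lo bnd_lo])
    show "0 \<le> \<alpha>" "\<alpha> \<le> 1" "0 \<le> \<alpha>'" "\<alpha>' \<le> 1" using a by auto
    fix m show "PS (lo_dig \<alpha>) m \<le> PS (lo_dig \<alpha>') m"
      unfolding PS_lo[OF a(1)] PS_lo[OF a'] using a by (simp add: floor_mono mult_left_mono)
  next
    show "PS (lo_dig \<alpha>) n < PS (lo_dig \<alpha>') n"
      unfolding PS_lo[OF a(1)] PS_lo[OF a'] using a lt by simp
  qed
qed

lemma B_props:
  assumes g0: "0 < g" and g1: "g < 1" and gq: "quotient_of g = (P, Q)"
  defines "Bs \<equiv> pre_per_seq (min_rot (farey_word (left_parent g))) (min_rot (farey_word g))"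
  shows "bnd Bs \<and> (\<forall>j. 1 \<le> j \<longrightarrow> PS Bs j \<le> real j * of_rat g - 1 / real (nat Q))"
proof -
  obtain a b c d where lq: "quotient_of (left_parent g) = (a, b)" and rq: "quotient_of (right_parent g) = (c, d)"
    and e1: "P * b - a * Q = 1" and e2: "Q * c - P * d = 1" and det: "b * c - a * d = 1"
    and ac: "a + c = P" and bd: "b + d = Q" and a0: "0 \<le> a" and b0: "0 < b" and c0: "0 < c" and d0: "0 < d"
    and l0: "0 \<le> left_parent g" and r1: "right_parent g \<le> 1" and lr: "left_parent g < right_parent g"
    by (rule parents[OF g0 g1 gq])
  define l where "l = left_parent g"
  have l01: "0 \<le> l" "l < 1" using l0 r1 lr unfolding l_def by auto
  have Q0: "0 < Q" using b0 d0 bd by simp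
  let ?xl = "(of_rat l :: real)" and ?xg = "(of_rat g :: real)"
  have xl: "0 \<le> ?xl" "?xl \<le> 1" using l01 by auto
  have xg: "0 \<le> ?xg" "?xg \<le> 1" using g0 g1 by auto
  have fl: "farey_word l = Wd l" using farey_word_eq l01 by simp
  have fg: "farey_word g = Wd g" using farey_word_eq g0 g1 by simp
  have Bs: "Bs = pre_per_seq (Lw l) (Lw g)" unfolding Bs_def l_def[symmetric] fl fg
    using min_rot_Wd l01 g0 g1 by simp
  have lq': "quotient_of l = (a, b)" using lq unfolding l_def .
  have lenl: "length (Lw l) = nat b" using lq' by (simp add: len_Lw)
  have leng: "length (Lw g) = nat Q" using gq by (simp add: len_Lw)
  have dig: "Bs i = (if i < nat b then lo_dig ?xl i else lo_dig ?xg (i - nat b))" for i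
  proof (cases "i < nat b")
    case True then show ?thesis unfolding Bs pre_per_seq_def lenl using nth_Lw[of i l] lq' by simp
  next
    case False
    have Q': "0 < nat Q" using Q0 by simp
    have "Lw g ! ((i - nat b) mod nat Q) = lo_dig ?xg ((i - nat b) mod nat Q)"
      using nth_Lw[of "(i - nat b) mod nat Q" g] gq Q' by simp
    also have "\<dots> = lo_dig ?xg (i - nat b)" using lo_dig_mod[OF gq] .
    finally show ?thesis unfolding Bs pre_per_seq_def lenl leng using False by simp
  qed
  have bndB: "bnd Bs" unfolding bnd_def using dig lo_dig_le1[OF xl] lo_dig_le1[OF xg] by simp
  have xlq: "?xl = of_int a / of_int b" using of_rat_quot[OF lq'] .
  have xgq: "?xg = of_int P / of_int Q" using of_rat_quot[OF gq] .
  have PS1: "PS Bs j = of_int ((int j * a) div b)" if j: "j \<le> nat b" for j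
  proof -
    have "PS Bs j = (\<Sum>i<j. real (lo_dig ?xl i))" unfolding PS_def using j dig by (intro sum.cong) auto
    also have "\<dots> = of_int (\<Sum>i<j. int (lo_dig ?xl i))" by simp
    also have "(\<Sum>i<j. int (lo_dig ?xl i)) = \<lfloor>real j * ?xl\<rfloor>" using lo_dig_sum[OF xl(1)] .
    also have "\<lfloor>real j * ?xl\<rfloor> = (int j * a) div b"
      unfolding xlq using floor_divide_of_int_eq[of "int j * a" b, where 'a=real] by simp
    finally show ?thesis .
  qed
  have PS2: "PS Bs (nat b + n) = of_int a + of_int \<lfloor>real n * ?xg\<rfloor>" for n
  proof -
    have "PS Bs (nat b) = of_int a"
    proof -
      have "(int (nat b) * a) div b = a" using b0 by simp
      then show ?thesis using PS1[of "nat b"] by simp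
    qed
    moreover have "PS (shift (nat b) Bs) n = (\<Sum>i<n. real (lo_dig ?xg i))"
      unfolding PS_def shift_def using dig by simp
    moreover have "(\<Sum>i<n. real (lo_dig ?xg i)) = of_int (\<Sum>i<n. int (lo_dig ?xg i))" by simp
    moreover have "(\<Sum>i<n. int (lo_dig ?xg i)) = \<lfloor>real n * ?xg\<rfloor>" using lo_dig_sum[OF xg(1)] .
    ultimately show ?thesis using PS_split[of Bs "nat b" n] by simp
  qed
  have Qr: "(0::real) < of_int Q" using Q0 by simp
  have nQ: "real (nat Q) = of_int Q" using Q0 by simp
  have bound: "PS Bs j \<le> real j * ?xg - 1 / real (nat Q)" if j: "1 \<le> j" for j
  proof (cases "j \<le> nat b")
    case True
    define m where "m = (int j * a) div b"
    have dm: "m * b + (int j * a) mod b = int j * a" unfolding m_def by simp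
    have mm: "0 \<le> (int j * a) mod b" using b0 by simp
    have mb: "0 \<le> int j * a - m * b" using dm mm by linarith
    have id: "b * (int j * P - m * Q) = Q * (int j * a - m * b) + int j * (P * b - a * Q)"
      by (simp add: algebra_simps)
    have "0 \<le> Q * (int j * a - m * b)" using Q0 mb by simp
    then have "1 \<le> b * (int j * P - m * Q)" unfolding id using e1 j by simp
    then have "0 < b * (int j * P - m * Q)" by simp
    then have "0 < int j * P - m * Q" using b0 zero_less_mult_pos by blast
    then have mQ: "m * Q \<le> int j * P - 1" by simp
    have "(of_int m :: real) * of_int Q \<le> of_int (int j * P - 1)"
      using mQ by (simp only: of_int_mult[symmetric] of_int_le_iff)
    then have "(of_int m :: real) \<le> of_int (int j * P - 1) / of_int Q" using Qr by (simp add: pos_le_divide_eq)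
    also have "\<dots> = real j * ?xg - 1 / real (nat Q)" unfolding xgq nQ using Qr by (simp add: field_simps)
    finally show ?thesis using PS1[OF True] unfolding m_def by simp
  next
    case False
    define n where "n = j - nat b"
    have jn: "j = nat b + n" using False unfolding n_def by simp
    have F: "of_int \<lfloor>real n * ?xg\<rfloor> \<le> real n * ?xg" by simp
    have A: "(of_int a :: real) = real (nat b) * ?xg - 1 / real (nat Q)"
    proof -
      have h: "(of_int P :: real) * of_int b - of_int a * of_int Q = 1"
        using arg_cong[OF e1, of "of_int :: int \<Rightarrow> real"] by simp
      have nb: "real (nat b) = of_int b" using b0 by simp
      have "real (nat b) * ?xg - 1 / real (nat Q) = (of_int P * of_int b - 1) / of_int Q"
        unfolding xgq nQ nb using Qr by (simp add: field_simps)
      also have "(of_int P * of_int b - 1 :: real) = of_int a * of_int Q" using h by linarith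
      also have "(of_int a * of_int Q :: real) / of_int Q = of_int a" using Qr by simp
      finally show ?thesis by simp
    qed
    have e: "real (nat b + n) * ?xg = real (nat b) * ?xg + real n * ?xg" by (simp add: algebra_simps)
    have "of_int a + of_int \<lfloor>real n * ?xg\<rfloor> \<le> (real (nat b) * ?xg - 1 / real (nat Q)) + real n * ?xg"
      using add_mono[OF eq_refl[OF A] F] .
    then show ?thesis unfolding jn PS2 e by (simp add: algebra_simps)
  qed
  show ?thesis using bndB bound by blast
qed

lemma nt_contra:
  fixes m n t :: nat
  assumes cop: "coprime m n" and t: "0 < t" "t < n"
    and eq: "\<And>i. (t + i) * m div n = t * m div n + i * m div n"
  shows False
proof -
  have n0: "0 < n" using t by simp
  have m0: "m \<noteq> 0"
  proof
    assume "m = 0" then have "n = 1" using cop by simp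
    then show False using t by simp
  qed
  define r where "r = t * m mod n"
  define A where "A = t * m div n"
  have tm: "t * m = n * A + r" unfolding r_def A_def by simp
  have rn: "r < n" unfolding r_def using n0 by simp
  have r0: "r \<noteq> 0"
  proof
    assume "r = 0"
    then have "n dvd t * m" unfolding r_def by (simp add: mod_eq_0_iff_dvd)
    then have "n dvd t" using cop by (simp add: coprime_commute coprime_dvd_mult_left_iff)
    then show False using t by (simp add: nat_dvd_not_less)
  qed
  obtain x y where xy: "m * x = n * y + gcd m n" using bezout_nat[OF m0, of n] by blast
  then have xy1: "m * x = n * y + 1" using cop by simp
  define i where "i = x * (n - r)"
  have im: "i * m = (n - r) + n * ((n - r) * y)"
  proof -
    have "i * m = (n - r) * (m * x)" unfolding i_def by (simp add: algebra_simps)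
    also have "\<dots> = (n - r) * (n * y + 1)" using xy1 by simp
    finally show ?thesis by (simp add: algebra_simps)
  qed
  have nr: "n - r < n" using r0 rn by simp
  have d1: "i * m div n = (n - r) * y"
    unfolding im using nr n0 by simp
  have tim: "(t + i) * m = n * (A + 1 + (n - r) * y)"
  proof -
    have "(t + i) * m = t * m + i * m" by (simp add: algebra_simps)
    also have "\<dots> = n * A + r + (n - r) + n * ((n - r) * y)" using tm im by simp
    also have "r + (n - r) = n" using rn by simp
    then have "n * A + r + (n - r) + n * ((n - r) * y) = n * (A + 1 + (n - r) * y)"
      by (simp add: algebra_simps)
    finally show ?thesis .
  qed
  have d2: "(t + i) * m div n = A + 1 + (n - r) * y" unfolding tim using n0 by simp
  show False using eq[of i] d1 d2 unfolding A_def by simp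
qed

lemma periodic_mech:
  fixes \<beta> lo hi :: real and m n :: nat
  assumes b: "1 < \<beta>" "\<beta> < 2" and n: "0 < n" and cop: "coprime m n" and mn: "m \<le> n"
    and good: "\<And>k. hi < seqval \<beta> (shift k (lo_dig (real m / real n))) \<and> seqval \<beta> (shift k (lo_dig (real m / real n))) < 1"
  shows "periodic_pt \<beta> n (seqval \<beta> (lo_dig (real m / real n))) \<and>
         orbit \<beta> (seqval \<beta> (lo_dig (real m / real n))) \<inter> {lo<..<hi} = {}"
proof -
  define \<alpha> where "\<alpha> = real m / real n"
  define s where "s = lo_dig \<alpha>"
  define x where "x = seqval \<beta> s"
  have a0: "0 \<le> \<alpha>" "\<alpha> \<le> 1" unfolding \<alpha>_def using n mn by auto
  have bs: "bnd s" unfolding s_def using bnd_lo[OF a0] .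
  have lt: "\<And>k. seqval \<beta> (shift k s) < 1" using good unfolding s_def \<alpha>_def by blast
  have T: "\<And>k. (Tb \<beta> ^^ k) x = seqval \<beta> (shift k s) \<and> gdig \<beta> x k = s k"
    unfolding x_def using adm_shift_lemma[OF b(1) bs lt] by blast
  have na: "real n * \<alpha> = of_int (int m)" unfolding \<alpha>_def using n by simp
  have sper: "s (i + n) = s i" for i
  proof -
    have e: "real (j + n) * \<alpha> = real j * \<alpha> + of_int (int m)" for j using na by (simp add: algebra_simps)
    have "\<lfloor>real (Suc i + n) * \<alpha>\<rfloor> = \<lfloor>real (Suc i) * \<alpha>\<rfloor> + int m" unfolding e by (rule floor_add_int[symmetric])
    moreover have "\<lfloor>real (i + n) * \<alpha>\<rfloor> = \<lfloor>real i * \<alpha>\<rfloor> + int m" unfolding e by (rule floor_add_int[symmetric])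
    ultimately show ?thesis unfolding s_def lo_dig_def by simp
  qed
  have shn: "shift n s = s" by (rule ext) (simp add: shift_def sper)
  have per: "(Tb \<beta> ^^ n) x = x" using T[of n] shn unfolding x_def by simp
  have least: "(Tb \<beta> ^^ t) x \<noteq> x" if t: "0 < t" "t < n" for t
  proof
    assume eqx: "(Tb \<beta> ^^ t) x = x"
    define s' where "s' = shift t s"
    have bs': "bnd s'" unfolding s'_def using bnd_shift[OF bs] .
    have lt': "\<And>k. seqval \<beta> (shift k s') < 1" unfolding s'_def using lt by simp
    have vx: "seqval \<beta> s' = x" using T[of t] eqx unfolding s'_def by simp
    have "gdig \<beta> (seqval \<beta> s') k = s' k" for k using adm_shift_lemma[OF b(1) bs' lt'] by blast
    then have sk: "s (k + t) = s k" for k using T[of k] vx unfolding s'_def shift_def by simp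
    have PSeq: "PS (shift t s) i = PS s i" for i unfolding PS_def shift_def using sk by simp
    have fl: "\<lfloor>real j * \<alpha>\<rfloor> = int (j * m div n)" for j
    proof -
      have "real j * \<alpha> = of_int (int (j * m)) / of_int (int n)" unfolding \<alpha>_def by simp
      then have "\<lfloor>real j * \<alpha>\<rfloor> = int (j * m) div int n" using floor_divide_of_int_eq by metis
      then show ?thesis by (simp add: zdiv_int)
    qed
    have "(t + i) * m div n = t * m div n + i * m div n" for i
    proof -
      have "PS (shift t s) i = PS s i" by (rule PSeq)
      then have "(of_int (\<lfloor>real (t + i) * \<alpha>\<rfloor> - \<lfloor>real t * \<alpha>\<rfloor>) :: real) = of_int \<lfloor>real i * \<alpha>\<rfloor>"
        unfolding s_def PS_shift_lo[OF a0(1)] PS_lo[OF a0(1)] .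
      then have "\<lfloor>real (t + i) * \<alpha>\<rfloor> - \<lfloor>real t * \<alpha>\<rfloor> = \<lfloor>real i * \<alpha>\<rfloor>" by (simp only: of_int_eq_iff)
      then show ?thesis unfolding fl by simp
    qed
    then show False using nt_contra[OF cop t] by blast
  qed
  have pp: "periodic_pt \<beta> n x"
    unfolding periodic_pt_def using T[of 0] seqval_nonneg[OF b(1) bs] lt[of 0] n per least unfolding x_def by auto
  have orb: "orbit \<beta> x \<inter> {lo<..<hi} = {}"
  proof -
    have "\<forall>y\<in>orbit \<beta> x. hi < y" unfolding orbit_def using T good unfolding s_def \<alpha>_def by auto
    then show ?thesis by auto
  qed
  show ?thesis using pp orb unfolding x_def s_def \<alpha>_def by blast
qed


theorem mainTheorem4:
  fixes \<beta> a b :: real and g :: rat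
  assumes "1 < \<beta>" and "\<beta> < 2"
    and "gamma_beta \<beta> = real_of_rat g" and "0 < g" and "g < 1"
    and "0 < a" and "a < b" and "b < 1"
    and "b < seqval \<beta> (pre_per_seq (min_rot (farey_word (left_parent g)))
                                     (min_rot (farey_word g)))"
  shows "(a, b) \<in> D2 \<beta> \<inter> D1 \<beta> \<inter> D0 \<beta>"
proof -
  note bb = assms(1,2)
  obtain P Q where gq: "quotient_of g = (P, Q)" by (cases "quotient_of g")
  have P0: "0 < P" and PQ: "P < Q" and Q0: "0 < Q" using quot_P_lt_Q[OF assms(4,5) gq] by auto
  define Bs where "Bs = pre_per_seq (min_rot (farey_word (left_parent g))) (min_rot (farey_word g))"
  have BP: "bnd Bs" "\<And>j. 1 \<le> j \<Longrightarrow> PS Bs j \<le> real j * of_rat g - 1 / real (nat Q)"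
    using B_props[OF assms(4,5) gq] unfolding Bs_def by auto
  define Qn where "Qn = nat Q"
  have Qn0: "0 < Qn" unfolding Qn_def using Q0 by simp
  define xg where "xg = (of_rat g :: real)"
  have xgq: "xg = of_int P / of_int Q" unfolding xg_def using of_rat_quot[OF gq] .
  have xg1: "xg < 1" "0 < xg" unfolding xg_def using assms(4,5) by auto
  have xgQ: "1 / real Qn \<le> xg"
  proof -
    have "(1::real) \<le> of_int P" using P0 by simp
    then have "1 / of_int Q \<le> (of_int P :: real) / of_int Q" using Q0 by (intro divide_right_mono) auto
    then show ?thesis unfolding xgq Qn_def using Q0 by simp
  qed
  have gap0: "b < seqval \<beta> Bs" using assms(9) unfolding Bs_def .
  define K where "K = 1 / ((\<beta> - 1) * (seqval \<beta> Bs - b))"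
  obtain N0 where N0: "K < \<beta> ^ N0" using real_arch_pow[OF bb(1)] by blast
  define N where "N = Suc N0"
  have N: "0 < N" unfolding N_def by simp
  have "\<beta> ^ N0 \<le> \<beta> ^ N" unfolding N_def using bb by (intro power_increasing) auto
  then have KN: "K < \<beta> ^ N" using N0 by simp
  have gap: "b + 1 / ((\<beta> - 1) * \<beta> ^ N) < seqval \<beta> Bs"
  proof -
    have pos: "0 < (\<beta> - 1) * (seqval \<beta> Bs - b)" using bb gap0 by simp
    have "1 < (\<beta> - 1) * (seqval \<beta> Bs - b) * \<beta> ^ N"
      using KN pos unfolding K_def by (simp add: field_simps)
    then have "1 / ((\<beta> - 1) * \<beta> ^ N) < seqval \<beta> Bs - b" using bb by (simp add: field_simps)
    then show ?thesis by simp
  qed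
  define \<alpha>0 where "\<alpha>0 = xg - 1 / (real N * real Qn)"
  have a00: "0 \<le> \<alpha>0"
  proof -
    have "1 / (real N * real Qn) \<le> 1 / real Qn" using N Qn0 by (simp add: field_simps)
    then show ?thesis unfolding \<alpha>0_def using xgQ by linarith
  qed
  have a0x: "\<alpha>0 < xg" unfolding \<alpha>0_def using N Qn0 by simp
  have good: "b < seqval \<beta> (shift k (lo_dig \<alpha>)) \<and> seqval \<beta> (shift k (lo_dig \<alpha>)) < 1"
    if al: "\<alpha>0 \<le> \<alpha>" "\<alpha> < xg" for \<alpha> k
  proof -
    obtain q2 where q2: "\<alpha> < of_rat q2" "0 \<le> q2" "q2 \<le> 1" "admissible \<beta> (per_seq (Wd q2))"
      using gamma_sup[OF bb assms(3)] al(2) unfolding xg_def by blast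
    show ?thesis
    proof (rule mech_good[OF bb BP(1) _ Qn0 N gap])
      show "\<And>j. 1 \<le> j \<Longrightarrow> PS Bs j \<le> real j * xg - 1 / real Qn" using BP(2) unfolding xg_def Qn_def by blast
      show "xg - 1 / (real N * real Qn) \<le> \<alpha>" using al(1) by (simp add: \<alpha>0_def)
      show "0 \<le> \<alpha>" using al a00 by simp
      show "\<alpha> \<le> 1" using al xg1 by simp
      show "\<alpha> \<le> of_rat q2" using q2 by simp
      show "0 \<le> q2" "admissible \<beta> (per_seq (Wd q2))" using q2 by auto
    qed
  qed
  define f where "f = (\<lambda>\<alpha>. seqval \<beta> (lo_dig \<alpha>))"
  have inJ: "f \<alpha> \<in> J_set \<beta> a b" if al: "\<alpha>0 \<le> \<alpha>" "\<alpha> < xg" for \<alpha>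
  proof -
    have al01: "0 \<le> \<alpha>" "\<alpha> \<le> 1" using al a00 xg1 by auto
    have lt: "\<And>k. seqval \<beta> (shift k (lo_dig \<alpha>)) < 1" using good[OF al] by blast
    have T: "\<And>k. (Tb \<beta> ^^ k) (f \<alpha>) = seqval \<beta> (shift k (lo_dig \<alpha>))"
      unfolding f_def using adm_shift_lemma[OF bb(1) bnd_lo[OF al01] lt] by blast
    have H0: "\<forall>n. b < (Tb \<beta> ^^ n) (f \<alpha>)" using T good[OF al] by simp
    have H: "\<forall>n. (Tb \<beta> ^^ n) (f \<alpha>) \<notin> {a<..<b}"
    proof
      fix n show "(Tb \<beta> ^^ n) (f \<alpha>) \<notin> {a<..<b}" using H0 by (metis greaterThanLessThan_iff less_asym)
    qed
    have "b < f \<alpha>" "f \<alpha> < 1" using good[OF al, of 0] unfolding f_def by simp_all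
    then show ?thesis unfolding J_set_def using assms(6,7) H by auto
  qed
  have inj: "inj_on f {\<alpha>0..<xg}"
  proof (rule inj_onI)
    fix u v assume u: "u \<in> {\<alpha>0..<xg}" and v: "v \<in> {\<alpha>0..<xg}" and e: "f u = f v"
    show "u = v"
    proof (rule ccontr)
      assume "u \<noteq> v"
      then consider "u < v" | "v < u" by linarith
      then show False
      proof cases
        case 1 then have "f u < f v" unfolding f_def using lo_strict[OF bb(1)] u v a00 xg1 by auto
        then show False using e by simp
      next
        case 2 then have "f v < f u" unfolding f_def using lo_strict[OF bb(1)] u v a00 xg1 by auto
        then show False using e by simp
      qed
    qed
  qed
  have sub: "f ` {\<alpha>0..<xg} \<subseteq> J_set \<beta> a b" using inJ by auto
  have unc: "uncountable (J_set \<beta> a b)"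
  proof
    assume "countable (J_set \<beta> a b)"
    then have "countable (f ` {\<alpha>0..<xg})" using countable_subset[OF sub] by blast
    then have "countable {\<alpha>0..<xg}" using countable_image_inj_on[OF _ inj] by blast
    then show False using uncountable_half_open_interval_1[of \<alpha>0 xg] a0x by simp
  qed
  have ne: "J_set \<beta> a b \<noteq> {}" using unc by auto
  define \<delta> where "\<delta> = 1 / (real N * real Qn)"
  have d0: "0 < \<delta>" unfolding \<delta>_def using N Qn0 by simp
  obtain n0 where n0: "\<And>n A. n0 \<le> n \<Longrightarrow> 0 \<le> A \<Longrightarrow> \<exists>m::nat. A \<le> real m \<and> real m < A + \<delta> * real n \<and> coprime m n"
    using coprime_in_interval[OF d0] by blast
  have notbad: "\<not> bad \<beta> a b n" if n: "max n0 1 \<le> n" for n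
  proof -
    have npos: "0 < n" using n by simp
    have A0: "0 \<le> real n * \<alpha>0" using a00 by simp
    obtain m :: nat where m: "real n * \<alpha>0 \<le> real m" "real m < real n * \<alpha>0 + \<delta> * real n" "coprime m n"
      using n0[OF _ A0, of n] n by auto
    have nr: "0 < real n" using npos by simp
    define \<alpha> where "\<alpha> = real m / real n"
    have al1: "\<alpha>0 \<le> \<alpha>" unfolding \<alpha>_def using m(1) nr by (simp add: pos_le_divide_eq mult.commute)
    have "real m < real n * xg" using m(2) unfolding \<alpha>0_def \<delta>_def by (simp add: algebra_simps)
    then have al2: "\<alpha> < xg" unfolding \<alpha>_def using nr by (simp add: pos_divide_less_eq mult.commute)
    have mn: "m \<le> n"
    proof -
      have "real m < real n" using \<open>real m < real n * xg\<close> xg1 nr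
        by (metis mult.right_neutral mult_strict_left_mono order.strict_trans)
      then show ?thesis by simp
    qed
    have pm: "periodic_pt \<beta> n (seqval \<beta> (lo_dig (real m / real n))) \<and>
         orbit \<beta> (seqval \<beta> (lo_dig (real m / real n))) \<inter> {a<..<b} = {}"
      using periodic_mech[OF bb npos m(3) mn, of b a] good[OF al1 al2] unfolding \<alpha>_def by blast
    then show ?thesis unfolding bad_def by blast
  qed
  have "B_set \<beta> a b \<subseteq> {..<max n0 1}"
  proof
    fix x assume "x \<in> B_set \<beta> a b"
    then have bx: "bad \<beta> a b x" unfolding B_set_def by simp
    show "x \<in> {..<max n0 1}"
    proof (rule ccontr)
      assume "x \<notin> {..<max n0 1}"
      then have "\<not> x < max n0 1" by simp
      then have "max n0 1 \<le> x" by (rule leI)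
      then show False using notbad bx by blast
    qed
  qed
  then have fin: "finite (B_set \<beta> a b)" using finite_subset by blast
  show ?thesis unfolding D0_def D1_def D2_def using fin unc ne by simp
qed


end
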